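(* There exist universal constants $c_2, c_3 > 0$ such that the following holds. Let $n \ge 2$, $L, \nu, D > 0$, and let $K \ge 1$ be an integer; set $\mu := \frac{L^{1/3}\nu^{2/3}}{D^{2/3}n^{1/3}K^{2/3}}$ and suppose $$K \ge c_3\max\left\{\frac{L^2D^2n}{\nu^2},\ \frac{\nu}{\mu D n^{1/2}}\right\}.$$ Then there exist a $2$-dimensional function $F \in \mathcal{F}(L,0,0,\nu)$ (with $n$ components) with a minimizer $\mathbf{x}^*$ and an initialization point $\mathbf{x}_0^1$ with $\|\mathbf{x}_0^1 - \mathbf{x}^*\| = D$ such that for any constant step size $0 < \eta \le \frac{1}{c_2Ln}$ and any nonnegative weights $\alpha_1,\dots,\alpha_{K+1}$ (not all zero), the weighted average iterate $\hat{\mathbf{x}} = \frac{\sum_{k=1}^{K+1}\alpha_k\mathbf{x}_0^k}{\sum_{k=1}^{K+1}\alpha_k}$ of SGD-RR satisfies $$\mathbb{E}\left[F(\hat{\mathbf{x}}) - F^*\right] = \Omega\left(\frac{L^{1/3}\nu^{2/3}D^{4/3}}{n^{1/3}K^{2/3}}\right).$$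
   Context: Finite-sum problem: $F(\mathbf{x}) = \frac1n\sum_{i=1}^n f_i(\mathbf{x})$ on $\mathbb{R}^d$, $F^* = \inf F$. $\mathcal{F}(L,\mu,\tau,\nu)$: all such $F$ with each $f_i$ $L$-smooth and convex, $F$ $\mu$-strongly convex ($\mu = 0$ meaning convex), and $\|\nabla f_i(\mathbf{x}) - \nabla F(\mathbf{x})\| \le \tau\|\nabla F(\mathbf{x})\| + \nu$ for all $i,\mathbf{x}$. SGD-RR with constant step size $\eta$: in each epoch $k=1,\dots,K$ a uniformly random permutation $\sigma_k$ of $[n]$ is drawn independently, $\mathbf{x}_i^k = \mathbf{x}_{i-1}^k - \eta\nabla f_{\sigma_k(i)}(\mathbf{x}_{i-1}^k)$, $\mathbf{x}_0^{k+1} = \mathbf{x}_n^k$. $\Omega(g)$ means at least a universal positive constant times $g$. *)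

theory Defs
  imports "HOL-Analysis.Analysis"
begin

definition grad :: "('a::real_inner \<Rightarrow> real) \<Rightarrow> 'a \<Rightarrow> 'a" where
  "grad f x = (SOME g. (f has_derivative (\<lambda>h. g \<bullet> h)) (at x))"

definition smooth :: "real \<Rightarrow> ('a::real_inner \<Rightarrow> real) \<Rightarrow> bool" where
  "smooth L f \<longleftrightarrow> (\<forall>x. f differentiable (at x)) \<and>
     (\<forall>x y. norm (grad f x - grad f y) \<le> L * norm (x - y))"

definition strongly_convex :: "real \<Rightarrow> ('a::real_inner \<Rightarrow> real) \<Rightarrow> bool" where
  "strongly_convex \<mu> f \<longleftrightarrow> convex_on UNIV (\<lambda>x. f x - \<mu> / 2 * (norm x)\<^sup>2)"

definition Fsum :: "nat \<Rightarrow> (nat \<Rightarrow> 'a \<Rightarrow> real) \<Rightarrow> 'a \<Rightarrow> real" where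
  "Fsum n f x = (\<Sum>i<n. f i x) / real n"

definition fclass :: "nat \<Rightarrow> real \<Rightarrow> real \<Rightarrow> real \<Rightarrow> real \<Rightarrow> (nat \<Rightarrow> 'a::real_inner \<Rightarrow> real) \<Rightarrow> bool" where
  "fclass n L \<mu> \<tau> \<nu> f \<longleftrightarrow>
     (\<forall>i<n. smooth L (f i) \<and> convex_on UNIV (f i)) \<and>
     strongly_convex \<mu> (Fsum n f) \<and>
     (\<forall>i<n. \<forall>x. norm (grad (f i) x - grad (Fsum n f) x) \<le> \<tau> * norm (grad (Fsum n f) x) + \<nu>)"

primrec inner_iter :: "(nat \<Rightarrow> 'a::real_inner \<Rightarrow> real) \<Rightarrow> real \<Rightarrow> (nat \<Rightarrow> nat) \<Rightarrow> 'a \<Rightarrow> nat \<Rightarrow> 'a" where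
  "inner_iter f \<eta> \<sigma> x 0 = x"
| "inner_iter f \<eta> \<sigma> x (Suc i) =
     inner_iter f \<eta> \<sigma> x i - \<eta> *\<^sub>R grad (f (\<sigma> i)) (inner_iter f \<eta> \<sigma> x i)"

text \<open>epoch_start n f eta s x0 k = x_0^(k+1), where s k is the permutation of epoch k (k >= 1).\<close>
primrec epoch_start :: "nat \<Rightarrow> (nat \<Rightarrow> 'a::real_inner \<Rightarrow> real) \<Rightarrow> real \<Rightarrow> (nat \<Rightarrow> nat \<Rightarrow> nat) \<Rightarrow> 'a \<Rightarrow> nat \<Rightarrow> 'a" where
  "epoch_start n f \<eta> s x0 0 = x0"
| "epoch_start n f \<eta> s x0 (Suc k) = inner_iter f \<eta> (s (Suc k)) (epoch_start n f \<eta> s x0 k) n"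

definition avg_iterate :: "nat \<Rightarrow> (nat \<Rightarrow> 'a::real_inner \<Rightarrow> real) \<Rightarrow> real \<Rightarrow> (nat \<Rightarrow> nat \<Rightarrow> nat) \<Rightarrow> 'a \<Rightarrow> nat \<Rightarrow> (nat \<Rightarrow> real) \<Rightarrow> 'a" where
  "avg_iterate n f \<eta> s x0 K \<alpha> =
     (1 / (\<Sum>k\<in>{1..K+1}. \<alpha> k)) *\<^sub>R (\<Sum>k\<in>{1..K+1}. \<alpha> k *\<^sub>R epoch_start n f \<eta> s x0 (k - 1))"

text \<open>Sample space: K independent uniformly random permutations sigma_1..sigma_K of {0..<n}.\<close>
definition perm_seqs :: "nat \<Rightarrow> nat \<Rightarrow> (nat \<Rightarrow> nat \<Rightarrow> nat) set" where
  "perm_seqs n K = PiE {1..K} (\<lambda>_. {\<sigma>. \<sigma> permutes {..<n}})"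

definition expect_rr :: "nat \<Rightarrow> nat \<Rightarrow> ((nat \<Rightarrow> nat \<Rightarrow> nat) \<Rightarrow> real) \<Rightarrow> real" where
  "expect_rr n K X = (\<Sum>s\<in>perm_seqs n K. X s) / real (card (perm_seqs n K))"

end

theory Submission
  imports Defs
begin


definition Gd :: "real \<Rightarrow> real \<Rightarrow> real" where
  "Gd L y = 3/4 * L * y - L/4 * \<bar>y\<bar>"

fun run1 :: "real \<Rightarrow> real \<Rightarrow> (nat \<Rightarrow> real) \<Rightarrow> real \<Rightarrow> nat \<Rightarrow> real" where
  "run1 L \<eta> bs y 0 = y"
| "run1 L \<eta> bs y (Suc i) = run1 L \<eta> bs y i - \<eta> * (Gd L (run1 L \<eta> bs y i) + bs i)"

lemma Gd_eq: "Gd L t = (if t \<ge> 0 then L/2 * t else L * t)"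
  unfolding Gd_def by (auto simp: algebra_simps)

lemma Gd_abs: "L \<ge> 0 \<Longrightarrow> \<bar>Gd L t\<bar> \<le> L * \<bar>t\<bar>"
  unfolding Gd_eq by (auto simp: abs_mult)

lemma Gd_lip: "L \<ge> 0 \<Longrightarrow> \<bar>Gd L a - Gd L b\<bar> \<le> L * \<bar>a - b\<bar>"
proof -
  assume L: "L \<ge> 0"
  have "\<bar>Gd L a - Gd L b\<bar> = \<bar>3/4 * L * (a - b) - L/4 * (\<bar>a\<bar> - \<bar>b\<bar>)\<bar>"
    unfolding Gd_def by (simp add: field_simps)
  also have "\<dots> \<le> 3/4 * L * \<bar>a - b\<bar> + L/4 * \<bar>\<bar>a\<bar> - \<bar>b\<bar>\<bar>"
    using L by (simp add: abs_mult abs_triangle_ineq4 [of _ "L/4 * (\<bar>a\<bar> - \<bar>b\<bar>)", simplified] 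
        order_trans[OF abs_triangle_ineq4])
  also have "\<dots> \<le> 3/4 * L * \<bar>a - b\<bar> + L/4 * \<bar>a - b\<bar>"
    using L by (intro add_left_mono mult_left_mono) (auto simp: abs_triangle_ineq3)
  finally show ?thesis by simp
qed

lemma Gd_split: "- Gd L z = L/2 * max (- z) 0 - L/2 * z"
  unfolding Gd_def by (cases "z \<ge> 0") (auto simp: algebra_simps)

lemma run1_closed:
  "run1 L \<eta> bs y i = y - \<eta> * (\<Sum>j<i. bs j) - \<eta> * (\<Sum>j<i. Gd L (run1 L \<eta> bs y j))"
  by (induction i) (auto simp: algebra_simps)

lemma run1_epoch:
  fixes L \<eta> :: real and n :: nat
  assumes L: "L > 0" and eta: "\<eta> > 0" and small: "\<eta> * L * n \<le> 1/64"
    and bsum: "(\<Sum>j<n. bs j) = 0"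
  defines "S \<equiv> \<lambda>i. (\<Sum>j<i. bs j)"
  shows "run1 L \<eta> bs y n \<ge> y - \<eta> * (L/2) * n * y + \<eta> * (L/2) * (\<Sum>i<n. max (\<eta> * S i - y) 0)
          + \<eta>^2 * (L/2) * (\<Sum>i<n. S i) - 2 * \<eta>^2 * L^2 * n * (\<Sum>i<n. \<bar>y - \<eta> * S i\<bar>)"
proof -
  define r where "r = run1 L \<eta> bs y"
  define z where "z = (\<lambda>i. y - \<eta> * S i)"
  define A where "A = (\<Sum>j<n. \<bar>r j\<bar>)"
  define Z where "Z = (\<Sum>j<n. \<bar>z j\<bar>)"
  have dev: "\<bar>r i - z i\<bar> \<le> \<eta> * L * (\<Sum>j<i. \<bar>r j\<bar>)" for i
  proof -
    have "r i - z i = - \<eta> * (\<Sum>j<i. Gd L (r j))"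
      unfolding r_def z_def S_def by (subst run1_closed) simp
    then have "\<bar>r i - z i\<bar> = \<eta> * \<bar>\<Sum>j<i. Gd L (r j)\<bar>" using eta by (simp add: abs_mult)
    also have "\<dots> \<le> \<eta> * (\<Sum>j<i. \<bar>Gd L (r j)\<bar>)" using eta by (intro mult_left_mono sum_abs) auto
    also have "\<dots> \<le> \<eta> * (\<Sum>j<i. L * \<bar>r j\<bar>)" using eta L
      by (intro mult_left_mono sum_mono Gd_abs) auto
    finally show ?thesis by (simp add: sum_distrib_left mult.assoc)
  qed
  have devA: "\<bar>r i - z i\<bar> \<le> \<eta> * L * A" if "i \<le> n" for i
  proof -
    have "(\<Sum>j<i. \<bar>r j\<bar>) \<le> A" unfolding A_def using that by (intro sum_mono2) auto
    then have "\<eta> * L * (\<Sum>j<i. \<bar>r j\<bar>) \<le> \<eta> * L * A" using eta L by (intro mult_left_mono) auto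
    then show ?thesis using dev[of i] by linarith
  qed
  have "A \<le> Z + \<eta> * L * n * A"
  proof -
    have "(\<Sum>j<n. \<bar>r j\<bar>) \<le> (\<Sum>j<n. \<bar>z j\<bar> + \<eta> * L * A)"
    proof (intro sum_mono)
      fix j assume "j \<in> {..<n}"
      then have "\<bar>r j - z j\<bar> \<le> \<eta> * L * A" using devA[of j] by auto
      then show "\<bar>r j\<bar> \<le> \<bar>z j\<bar> + \<eta> * L * A" by linarith
    qed
    also have "\<dots> = Z + \<eta> * L * n * A" by (simp add: sum.distrib Z_def)
    finally show ?thesis by (simp add: A_def)
  qed
  then have A1: "A * (1 - \<eta> * L * n) \<le> Z" by (simp add: algebra_simps)
  have A0: "A \<ge> 0" unfolding A_def by (intro sum_nonneg) auto
  have "A * (1/2) \<le> A * (1 - \<eta> * L * n)" using small A0 by (intro mult_left_mono) auto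
  then have A2: "A \<le> 2 * Z" using A1 by linarith
  have main: "r n = y + \<eta> * (\<Sum>i<n. - Gd L (r i))"
    unfolding r_def using bsum by (subst run1_closed) (simp add: sum_negf)
  have lip: "(\<Sum>i<n. - Gd L (r i)) \<ge> (\<Sum>i<n. - Gd L (z i)) - (\<Sum>i<n. L * (\<eta> * L * (2*Z)))"
  proof -
    have "(\<Sum>i<n. - Gd L (z i)) - (\<Sum>i<n. L * (\<eta> * L * (2*Z))) = (\<Sum>i<n. - Gd L (z i) - L * (\<eta> * L * (2*Z)))"
      by (simp add: sum_subtractf)
    also have "\<dots> \<le> (\<Sum>i<n. - Gd L (r i))"
    proof (intro sum_mono)
      fix i assume "i \<in> {..<n}"
      have "\<eta> * L * A \<le> \<eta> * L * (2*Z)" using A2 eta L by (intro mult_left_mono) auto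
      then have "\<bar>r i - z i\<bar> \<le> \<eta> * L * (2*Z)" using devA[of i] \<open>i \<in> {..<n}\<close> by auto
      then have "L * \<bar>r i - z i\<bar> \<le> L * (\<eta> * L * (2*Z))" using L by (intro mult_left_mono) auto
      then have "\<bar>Gd L (r i) - Gd L (z i)\<bar> \<le> L * (\<eta> * L * (2*Z))"
        using Gd_lip[of L "r i" "z i"] L by linarith
      then show "- Gd L (z i) - L * (\<eta> * L * (2*Z)) \<le> - Gd L (r i)" by linarith
    qed
    finally show ?thesis by linarith
  qed
  have zsum: "(\<Sum>i<n. - Gd L (z i)) = L/2 * (\<Sum>i<n. max (\<eta> * S i - y) 0) - L/2 * n * y + \<eta> * (L/2) * (\<Sum>i<n. S i)"
  proof -
    have "(\<Sum>i<n. - Gd L (z i)) = (\<Sum>i<n. L/2 * max (\<eta> * S i - y) 0 - L/2 * y + \<eta> * (L/2) * S i)"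
      by (intro sum.cong refl) (simp add: Gd_split z_def algebra_simps)
    then show ?thesis by (simp add: sum.distrib sum_subtractf sum_distrib_left)
  qed
  have "r n \<ge> y + \<eta> * ((\<Sum>i<n. - Gd L (z i)) - (\<Sum>i<n. L * (\<eta> * L * (2*Z))))"
    using main mult_left_mono[OF lip, of \<eta>] eta by simp
  also have "y + \<eta> * ((\<Sum>i<n. - Gd L (z i)) - (\<Sum>i<n. L * (\<eta> * L * (2*Z)))) =
     y - \<eta> * (L/2) * n * y + \<eta> * (L/2) * (\<Sum>i<n. max (\<eta> * S i - y) 0)
          + \<eta>^2 * (L/2) * (\<Sum>i<n. S i) - 2 * \<eta>^2 * L^2 * n * Z"
    unfolding zsum by (simp add: algebra_simps power2_eq_square)
  finally show ?thesis unfolding r_def Z_def z_def .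
qed


lemma pair_ineq: "max (x - y) 0 + max (- x - y) 0 \<ge> 3/4 * \<bar>x\<bar> - y + 1/4 * max (- y) (0::real)"
  by (auto simp: abs_if max_def)

lemma half_le: "2 * (a::real) \<le> 2 * b \<Longrightarrow> a \<le> b" by simp

lemma sum_invol:
  assumes "\<And>A. A \<in> E \<Longrightarrow> c A \<in> E" "\<And>A. A \<in> E \<Longrightarrow> c (c A) = A"
  shows "(\<Sum>A\<in>E. h (c A)) = (\<Sum>A\<in>E. (h A :: real))"
proof -
  have "bij_betw c E E"
    by (rule bij_betwI[where g=c]) (use assms in auto)
  then show ?thesis by (rule sum.reindex_bij_betw)
qed

lemma flip_avg:
  fixes R :: "'a \<Rightarrow> real" and S :: "'a \<Rightarrow> nat \<Rightarrow> real"
  assumes fin: "finite E" and c1: "\<And>A. A \<in> E \<Longrightarrow> c A \<in> E" and c2: "\<And>A. A \<in> E \<Longrightarrow> c (c A) = A"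
    and Sc: "\<And>A i. A \<in> E \<Longrightarrow> S (c A) i = - S A i"
    and L: "L > 0" and eta: "\<eta> > 0" and small: "\<eta> * L * n \<le> 1/64"
    and bound: "\<And>A. A \<in> E \<Longrightarrow> R A \<ge> y - \<eta> * (L/2) * n * y + \<eta> * (L/2) * (\<Sum>i<n. max (\<eta> * S A i - y) 0)
          + \<eta>^2 * (L/2) * (\<Sum>i<n. S A i) - 2 * \<eta>^2 * L^2 * n * (\<Sum>i<n. \<bar>y - \<eta> * S A i\<bar>)"
  shows "(\<Sum>A\<in>E. R A) \<ge> card E * ((1 - (3/4 * \<eta> * L * n + 2 * (\<eta> * L * n)^2)) * y)
            + 5/32 * \<eta>^2 * L * (\<Sum>A\<in>E. \<Sum>i<n. \<bar>S A i\<bar>)"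
proof -
  define \<rho> where "\<rho> = 3/4 * \<eta> * L * n + 2 * (\<eta> * L * n)^2"
  define B where "B = (\<lambda>A. y - \<eta> * (L/2) * n * y + \<eta> * (L/2) * (\<Sum>i<n. max (\<eta> * S A i - y) 0)
          + \<eta>^2 * (L/2) * (\<Sum>i<n. S A i) - 2 * \<eta>^2 * L^2 * n * (\<Sum>i<n. \<bar>y - \<eta> * S A i\<bar>))"
  define T where "T = (\<lambda>A. (\<Sum>i<n. \<bar>S A i\<bar>))"
  have T0: "T A \<ge> 0" for A unfolding T_def by (intro sum_nonneg) auto
  have key: "B A + B (c A) \<ge> 2 * ((1 - \<rho>) * y) + 2 * (5/32 * \<eta>^2 * L) * T A" if A: "A \<in> E" for A
  proof -
    have p1: "(\<Sum>i<n. max (\<eta> * S A i - y) 0) + (\<Sum>i<n. max (\<eta> * S (c A) i - y) 0)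
        \<ge> (\<Sum>i<n. 3/4 * \<bar>\<eta> * S A i\<bar> - y + 1/4 * max (- y) 0)"
      unfolding sum.distrib[symmetric] Sc[OF A]
      by (intro sum_mono) (use pair_ineq[of "\<eta> * S A _" y] in auto)
    have p1': "(\<Sum>i<n. 3/4 * \<bar>\<eta> * S A i\<bar> - y + 1/4 * max (- y) 0) = 3/4 * \<eta> * T A - n * y + n/4 * max (-y) 0"
      unfolding T_def using eta by (simp add: sum.distrib sum_subtractf sum_distrib_left abs_mult mult.assoc)
    have p2: "(\<Sum>i<n. S A i) + (\<Sum>i<n. S (c A) i) = 0"
      unfolding Sc[OF A] by (simp add: sum_negf)
    have p3: "(\<Sum>i<n. \<bar>y - \<eta> * S A i\<bar>) + (\<Sum>i<n. \<bar>y - \<eta> * S (c A) i\<bar>) \<le> (\<Sum>i<n. 2 * \<bar>y\<bar> + 2 * \<eta> * \<bar>S A i\<bar>)"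
      unfolding sum.distrib[symmetric] Sc[OF A]
    proof (intro sum_mono)
      fix i
      have "\<bar>y - \<eta> * S A i\<bar> \<le> \<bar>y\<bar> + \<bar>\<eta> * S A i\<bar>" by (rule abs_triangle_ineq4)
      moreover have "\<bar>y + \<eta> * S A i\<bar> \<le> \<bar>y\<bar> + \<bar>\<eta> * S A i\<bar>" by (rule abs_triangle_ineq)
      moreover have "\<bar>\<eta> * S A i\<bar> = \<eta> * \<bar>S A i\<bar>" using eta by (simp add: abs_mult)
      ultimately show "\<bar>y - \<eta> * S A i\<bar> + \<bar>y - \<eta> * - S A i\<bar> \<le> 2 * \<bar>y\<bar> + 2 * \<eta> * \<bar>S A i\<bar>"
        by simp
    qed
    have p3': "(\<Sum>i<n. 2 * \<bar>y\<bar> + 2 * \<eta> * \<bar>S A i\<bar>) = 2 * n * \<bar>y\<bar> + 2 * \<eta> * T A"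
      unfolding T_def by (simp add: sum.distrib sum_distrib_left)
    define P where "P = (\<Sum>i<n. max (\<eta> * S A i - y) 0) + (\<Sum>i<n. max (\<eta> * S (c A) i - y) 0)"
    define Q where "Q = (\<Sum>i<n. \<bar>y - \<eta> * S A i\<bar>) + (\<Sum>i<n. \<bar>y - \<eta> * S (c A) i\<bar>)"
    have e: "B A + B (c A) = 2 * y - \<eta> * L * n * y + \<eta> * (L/2) * P - 2 * \<eta>^2 * L^2 * n * Q"
    proof -
      have p2': "(\<Sum>i<n. S (c A) i) = - (\<Sum>i<n. S A i)" using p2 by linarith
      show ?thesis unfolding B_def P_def Q_def p2' by (simp add: algebra_simps)
    qed
    have hP: "\<eta> * (L/2) * P \<ge> \<eta> * (L/2) * (3/4 * \<eta> * T A - n * y + n/4 * max (-y) 0)"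
      using p1 p1' eta L unfolding P_def by (intro mult_left_mono) auto
    have hQ: "2 * \<eta>^2 * L^2 * n * Q \<le> 2 * \<eta>^2 * L^2 * n * (2 * n * \<bar>y\<bar> + 2 * \<eta> * T A)"
      using p3 p3' eta L unfolding Q_def by (intro mult_left_mono) auto
    define u where "u = \<eta> * L * n"
    have u0: "u \<ge> 0" using eta L unfolding u_def by auto
    have absy: "\<bar>y\<bar> = y + 2 * max (-y) 0" by (auto simp: abs_if max_def)
    have X: "B A + B (c A) \<ge> 2 * y - \<eta> * L * n * y + \<eta> * (L/2) * (3/4 * \<eta> * T A - n * y + n/4 * max (-y) 0)
        - 2 * \<eta>^2 * L^2 * n * (2 * n * \<bar>y\<bar> + 2 * \<eta> * T A)"
      using e hP hQ by linarith
    have Xe: "2 * y - \<eta> * L * n * y + \<eta> * (L/2) * (3/4 * \<eta> * T A - n * y + n/4 * max (-y) 0)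
        - 2 * \<eta>^2 * L^2 * n * (2 * n * \<bar>y\<bar> + 2 * \<eta> * T A) = 2 * y - 3/2 * u * y - 4 * u^2 * y + (u/8 - 8 * u^2) * max (-y) 0
        + (3/8 - 4 * u) * \<eta>^2 * L * T A"
      unfolding absy u_def by (simp add: algebra_simps power2_eq_square)
    have Y: "2 * y - 3/2 * u * y - 4 * u^2 * y + (u/8 - 8 * u^2) * max (-y) 0
        + (3/8 - 4 * u) * \<eta>^2 * L * T A \<ge> 2 * y - 3/2 * u * y - 4 * u^2 * y + (3/8 - 4 * u) * \<eta>^2 * L * T A"
    proof -
      have "u/8 - 8 * u^2 = u * (1/8 - 8 * u)" by (simp add: algebra_simps power2_eq_square)
      moreover have "1/8 - 8 * u \<ge> 0" using small unfolding u_def by simp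
      ultimately have "u/8 - 8 * u^2 \<ge> 0" using u0 by simp
      then show ?thesis by (simp add: max_def)
    qed
    have Z: "(3/8 - 4 * u) * \<eta>^2 * L * T A \<ge> 2 * (5/32 * \<eta>^2 * L) * T A"
    proof -
      have "(3/8 - 4 * u) \<ge> 2 * (5/32)" using small unfolding u_def by simp
      then have "(3/8 - 4 * u) * (\<eta>^2 * L * T A) \<ge> 2 * (5/32) * (\<eta>^2 * L * T A)"
        using T0[of A] L by (intro mult_right_mono) auto
      then show ?thesis by (simp add: mult_ac)
    qed
    have W: "2 * y - 3/2 * u * y - 4 * u^2 * y = 2 * ((1 - \<rho>) * y)"
      unfolding \<rho>_def u_def by (simp add: algebra_simps power2_eq_square)
    show ?thesis using X Xe Y Z W by linarith
  qed
  have "2 * (\<Sum>A\<in>E. R A) \<ge> 2 * (\<Sum>A\<in>E. B A)"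
    using bound unfolding B_def by (simp add: sum_mono)
  also have "2 * (\<Sum>A\<in>E. B A) = (\<Sum>A\<in>E. B A + B (c A))"
    using sum_invol[of E c B, OF c1 c2] by (simp add: sum.distrib)
  also have "\<dots> \<ge> (\<Sum>A\<in>E. 2 * ((1 - \<rho>) * y) + 2 * (5/32 * \<eta>^2 * L) * T A)"
    by (intro sum_mono key)
  finally have F: "(\<Sum>A\<in>E. 2 * ((1 - \<rho>) * y) + 2 * (5/32 * \<eta>^2 * L) * T A) \<le> 2 * (\<Sum>A\<in>E. R A)" .
  have s: "(\<Sum>A\<in>E. 2 * ((1 - \<rho>) * y) + 2 * (5/32 * \<eta>^2 * L) * T A)
      = 2 * (card E * ((1 - \<rho>) * y) + 5/32 * \<eta>^2 * L * (\<Sum>A\<in>E. T A))"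
  proof -
    have a: "(\<Sum>A\<in>E. 2 * (5/32 * \<eta>^2 * L) * T A) = 2 * (5/32 * \<eta>^2 * L) * (\<Sum>A\<in>E. T A)"
      by (rule sum_distrib_left[symmetric])
    have b: "(\<Sum>A\<in>E. 2 * ((1 - \<rho>) * y)) = card E * (2 * ((1 - \<rho>) * y))" by simp
    show ?thesis unfolding sum.distrib a b by (simp add: algebra_simps)
  qed
  have "(\<Sum>A\<in>E. R A) \<ge> card E * ((1 - \<rho>) * y) + 5/32 * \<eta>^2 * L * (\<Sum>A\<in>E. T A)"
    by (rule half_le) (use F s in simp)
  then show ?thesis unfolding \<rho>_def T_def .
qed


definition sg :: "nat set \<Rightarrow> nat \<Rightarrow> real" where
  "sg A t = (if t \<in> A then -1 else 1)"

definition Xr :: "nat set \<Rightarrow> (nat \<Rightarrow> real) \<Rightarrow> nat set \<Rightarrow> real" where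
  "Xr I c A = (\<Sum>t\<in>I. sg A t * c t)"

lemma pow4_pair: "((a::real) + X)^4 + (X - a)^4 = 2 * X^4 + 12 * a^2 * X^2 + 2 * a^4"
  by (simp add: power4_eq_xxxx power2_eq_square algebra_simps)
lemma pow2_pair: "((a::real) + X)^2 + (X - a)^2 = 2 * X^2 + 2 * a^2"
  by (simp add: power2_eq_square algebra_simps)
lemma m4_step: fixes k s c :: real assumes "k \<ge> 0" shows "2 * (3 * k * s^2) + 12 * (c)^2 * (k * s) + k * (2 * (c)^4)
          \<le> 3 * (2 * k) * ((c)^2 + s)^2"
proof -
  have "3 * (2 * k) * ((c)^2 + s)^2 - (2 * (3 * k * s^2) + 12 * (c)^2 * (k * s) + k * (2 * (c)^4)) = k * (4 * c^4)"
    by (simp add: power2_eq_square power4_eq_xxxx algebra_simps)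
  moreover have "k * (4 * c^4) \<ge> 0" using assms by simp
  ultimately show ?thesis by linarith
qed

lemma sum_Pow_insert:
  assumes "finite F" "x \<notin> F"
  shows "(\<Sum>A\<in>Pow (insert x F). h A) = (\<Sum>A\<in>Pow F. h A + h (insert x A))"
proof -
  have d: "Pow F \<inter> insert x ` Pow F = {}" using assms by auto
  have inj: "inj_on (insert x) (Pow F)"
  proof (rule inj_onI)
    fix a b assume ab: "a \<in> Pow F" "b \<in> Pow F" "insert x a = insert x b"
    then have "x \<notin> a" "x \<notin> b" using assms by auto
    then show "a = b" using ab(3) by (metis Diff_insert_absorb)
  qed
  have "(\<Sum>A\<in>Pow (insert x F). h A) = (\<Sum>A\<in>Pow F. h A) + (\<Sum>A\<in>insert x ` Pow F. h A)"
    unfolding Pow_insert using assms d by (intro sum.union_disjoint) auto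
  also have "(\<Sum>A\<in>insert x ` Pow F. h A) = (\<Sum>A\<in>Pow F. h (insert x A))"
    using sum.reindex[OF inj] by simp
  finally show ?thesis by (simp add: sum.distrib)
qed

lemma Xr_insert:
  assumes "finite F" "x \<notin> F" "A \<in> Pow F"
  shows "Xr (insert x F) c A = c x + Xr F c A"
    and "Xr (insert x F) c (insert x A) = - c x + Xr F c A"
proof -
  have "x \<notin> A" using assms by auto
  then show "Xr (insert x F) c A = c x + Xr F c A"
    using assms unfolding Xr_def by (simp add: sg_def)
  have "(\<Sum>t\<in>F. sg (insert x A) t * c t) = (\<Sum>t\<in>F. sg A t * c t)"
    using assms by (intro sum.cong refl) (auto simp: sg_def)
  then show "Xr (insert x F) c (insert x A) = - c x + Xr F c A"
    using assms unfolding Xr_def by (simp add: sg_def)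
qed

lemma Xr_moments:
  assumes "finite I"
  shows "(\<Sum>A\<in>Pow I. (Xr I c A)^2) = 2 ^ card I * (\<Sum>t\<in>I. (c t)^2)"
    and "(\<Sum>A\<in>Pow I. (Xr I c A)^4) \<le> 3 * 2 ^ card I * (\<Sum>t\<in>I. (c t)^2)^2"
  using assms
proof (induction I rule: finite_induct)
  case empty
  { case 1 show ?case by (simp add: Xr_def) }
  { case 2 show ?case by (simp add: Xr_def) }
next
  case (insert x F)
  define s where "s = (\<Sum>t\<in>F. (c t)^2)"
  have s0: "s \<ge> 0" unfolding s_def by (intro sum_nonneg) auto
  have cardP: "card (Pow F) = 2 ^ card F" using insert by (simp add: card_Pow)
  have e2: "(\<Sum>A\<in>Pow (insert x F). (Xr (insert x F) c A)^2) = (\<Sum>A\<in>Pow F. 2 * (Xr F c A)^2 + 2 * (c x)^2)"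
    using insert by (subst sum_Pow_insert) (auto intro!: sum.cong simp: Xr_insert pow2_pair)
  { case 1
    show ?case unfolding e2 using insert cardP
      by (simp add: sum.distrib sum_distrib_left[symmetric] s_def algebra_simps)
  }
  { case 2
    have e4: "(\<Sum>A\<in>Pow (insert x F). (Xr (insert x F) c A)^4) = (\<Sum>A\<in>Pow F. 2 * (Xr F c A)^4 + 12 * (c x)^2 * (Xr F c A)^2 + 2 * (c x)^4)"
      using insert by (subst sum_Pow_insert) (auto intro!: sum.cong simp: Xr_insert pow4_pair)
    have "(\<Sum>A\<in>Pow F. 2 * (Xr F c A)^4 + 12 * (c x)^2 * (Xr F c A)^2 + 2 * (c x)^4)
        = 2 * (\<Sum>A\<in>Pow F. (Xr F c A)^4) + 12 * (c x)^2 * (\<Sum>A\<in>Pow F. (Xr F c A)^2) + 2 ^ card F * (2 * (c x)^4)"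
      using cardP by (simp add: sum.distrib sum_distrib_left)
    also have "\<dots> \<le> 2 * (3 * 2 ^ card F * s^2) + 12 * (c x)^2 * (2 ^ card F * s) + 2 ^ card F * (2 * (c x)^4)"
      using insert.IH unfolding s_def by simp
    also have "\<dots> \<le> 3 * 2 ^ card (insert x F) * (\<Sum>t\<in>insert x F. (c t)^2)^2"
    proof -
      have "(\<Sum>t\<in>insert x F. (c t)^2) = (c x)^2 + s" using insert unfolding s_def by simp
      moreover have "2 * (3 * 2 ^ card F * s^2) + 12 * (c x)^2 * (2 ^ card F * s) + 2 ^ card F * (2 * (c x)^4)
          \<le> 3 * (2 * 2 ^ card F) * ((c x)^2 + s)^2"
        by (rule m4_step) simp
      ultimately show ?thesis using insert by simp
    qed
    finally show ?case unfolding e4 .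
  }
qed

lemma Xr_compl:
  assumes "A \<subseteq> I" shows "Xr I c (I - A) = - Xr I c A"
proof -
  have "Xr I c (I - A) = (\<Sum>t\<in>I. - (sg A t * c t))"
    unfolding Xr_def by (intro sum.cong refl) (auto simp: sg_def)
  then show ?thesis unfolding Xr_def by (simp add: sum_negf)
qed

lemma abs_poly_lower:
  fixes x M :: real assumes M: "M > 0"
  shows "\<bar>x\<bar> \<ge> 3/2 * x^2 / M - x^4 / (2 * M^3)"
proof -
  define a where "a = \<bar>x\<bar>"
  have a0: "a \<ge> 0" unfolding a_def by simp
  have e: "a * ((a - M)^2 * (a + 2 * M)) = 2 * M^3 * a - 3 * M^2 * a^2 + a^4"
    by (simp add: power2_eq_square power3_eq_cube power4_eq_xxxx algebra_simps)
  have "a * ((a - M)^2 * (a + 2 * M)) \<ge> 0" using a0 M by simp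
  then have 1: "2 * M^3 * a \<ge> 3 * M^2 * a^2 - a^4" unfolding e by linarith
  have "x^2 = a^2" "x^4 = a^4" unfolding a_def by (simp_all add: power2_abs power4_eq_xxxx)
  then have 2: "2 * M^3 * \<bar>x\<bar> \<ge> 3 * M^2 * x^2 - x^4" using 1 unfolding a_def by simp
  have e2: "3/2 * x^2 / M - x^4 / (2 * M^3) = (3 * M^2 * x^2 - x^4) / (2 * M^3)"
    using M by (simp add: field_simps power2_eq_square power3_eq_cube)
  have "(3 * M^2 * x^2 - x^4) / (2 * M^3) \<le> (2 * M^3 * \<bar>x\<bar>) / (2 * M^3)"
    using 2 M by (intro divide_right_mono) auto
  also have "\<dots> = \<bar>x\<bar>" using M by simp
  finally show ?thesis unfolding e2 .
qed

lemma khintchine: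
  assumes I: "finite I" and M: "M > 0" and sM: "(\<Sum>t\<in>I. (c t)^2) \<le> M^2 / 4"
  shows "(\<Sum>A\<in>Pow I. \<bar>Xr I c A\<bar>) \<ge> 2 ^ card I * (9/8 * (\<Sum>t\<in>I. (c t)^2) / M)"
proof -
  define s where "s = (\<Sum>t\<in>I. (c t)^2)"
  have s0: "s \<ge> 0" unfolding s_def by (intro sum_nonneg) auto
  have "(\<Sum>A\<in>Pow I. \<bar>Xr I c A\<bar>) \<ge> (\<Sum>A\<in>Pow I. 3/2 * (Xr I c A)^2 / M - (Xr I c A)^4 / (2 * M^3))"
    by (intro sum_mono abs_poly_lower M)
  also have "(\<Sum>A\<in>Pow I. 3/2 * (Xr I c A)^2 / M - (Xr I c A)^4 / (2 * M^3))
     = 3/2 / M * (\<Sum>A\<in>Pow I. (Xr I c A)^2) - (\<Sum>A\<in>Pow I. (Xr I c A)^4) / (2 * M^3)"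
    by (simp add: sum_subtractf sum_distrib_left sum_divide_distrib)
  also have "\<dots> \<ge> 3/2 / M * (2 ^ card I * s) - (3 * 2 ^ card I * s^2) / (2 * M^3)"
    using Xr_moments[OF I, of c] M unfolding s_def
    by (intro diff_mono divide_right_mono) auto
  finally have 1: "(\<Sum>A\<in>Pow I. \<bar>Xr I c A\<bar>) \<ge> 3/2 / M * (2 ^ card I * s) - (3 * 2 ^ card I * s^2) / (2 * M^3)" .
  have "s^2 \<le> s * (M^2/4)" using sM s0 unfolding s_def power2_eq_square by (intro mult_left_mono) auto
  then have "(3 * 2 ^ card I * s^2) / (2 * M^3) \<le> (3 * 2 ^ card I * (s * (M^2/4))) / (2 * M^3)"
    using M by (intro divide_right_mono mult_left_mono) auto
  also have "\<dots> = 2 ^ card I * (3/8 * s / M)" using M by (simp add: field_simps power2_eq_square power3_eq_cube)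
  finally have 2: "(3 * 2 ^ card I * s^2) / (2 * M^3) \<le> 2 ^ card I * (3/8 * s / M)" .
  have "3/2 / M * (2 ^ card I * s) = 2 ^ card I * (3/2 * s / M)" by simp
  with 1 2 have "(\<Sum>A\<in>Pow I. \<bar>Xr I c A\<bar>) \<ge> 2 ^ card I * (3/2 * s / M) - 2 ^ card I * (3/8 * s / M)" by linarith
  also have "2 ^ card I * (3/2 * s / M) - 2 ^ card I * (3/8 * s / M) = 2 ^ card I * (9/8 * s / M)"
    by (simp add: algebra_simps)
  finally show ?thesis unfolding s_def .
qed


definition bb :: "nat \<Rightarrow> real \<Rightarrow> nat \<Rightarrow> real" where
  "bb m \<nu> k = (if k < m then \<nu> else if k < 2 * m then - \<nu> else 0)"

definition tau :: "nat \<Rightarrow> nat set \<Rightarrow> nat \<Rightarrow> nat" where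
  "tau m A k = (if k < m \<and> k \<in> A then k + m else if m \<le> k \<and> k < 2 * m \<and> k - m \<in> A then k - m else k)"

lemma tau_invol: "tau m A (tau m A k) = k"
  unfolding tau_def by auto

lemma tau_permutes:
  assumes "2 * m \<le> n" shows "tau m A permutes {..<n}"
proof (rule bij_imp_permutes)
  have b: "bij (tau m A)" by (rule involuntory_imp_bij) (rule tau_invol)
  have img: "tau m A ` {..<n} \<subseteq> {..<n}" using assms unfolding tau_def by auto
  show "bij_betw (tau m A) {..<n} {..<n}"
  proof (rule bij_betw_imageI)
    show "inj_on (tau m A) {..<n}" using b bij_is_inj inj_on_subset by blast
    show "tau m A ` {..<n} = {..<n}"
    proof
      show "tau m A ` {..<n} \<subseteq> {..<n}" by fact
      show "{..<n} \<subseteq> tau m A ` {..<n}"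
      proof
        fix x assume "x \<in> {..<n}"
        then have "tau m A x \<in> {..<n}" using img by auto
        then show "x \<in> tau m A ` {..<n}" using tau_invol[of m A x] by (metis image_eqI)
      qed
    qed
  qed
  show "\<And>x. x \<notin> {..<n} \<Longrightarrow> tau m A x = x" using assms unfolding tau_def by auto
qed

definition cc :: "nat \<Rightarrow> real \<Rightarrow> (nat \<Rightarrow> nat) \<Rightarrow> nat \<Rightarrow> nat \<Rightarrow> real" where
  "cc m \<nu> \<sigma> i t = (\<Sum>j<i. (if \<sigma> j = t then \<nu> else 0) + (if \<sigma> j = m + t then - \<nu> else 0))"

lemma bb_tau_sum:
  assumes m: "m \<ge> 1"
  shows "bb m \<nu> (tau m A k) = (\<Sum>t<m. sg A t * ((if k = t then \<nu> else 0) + (if k = m + t then - \<nu> else 0)))"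
proof -
  have "(\<Sum>t<m. sg A t * ((if k = t then \<nu> else 0) + (if k = m + t then - \<nu> else 0)))
     = (\<Sum>t<m. (if k = t then sg A t * \<nu> else 0)) + (\<Sum>t<m. (if t = k - m \<and> m \<le> k then - (sg A t * \<nu>) else 0))"
    by (subst sum.distrib[symmetric]) (intro sum.cong refl, auto)
  also have "\<dots> = (if k < m then sg A k * \<nu> else 0) + (if m \<le> k \<and> k < 2 * m then - (sg A (k - m) * \<nu>) else 0)"
  proof -
    have "(\<Sum>t<m. (if t = k - m \<and> m \<le> k then - (sg A t * \<nu>) else 0)) = (if m \<le> k then (\<Sum>t<m. (if t = k - m then - (sg A t * \<nu>) else 0)) else 0)"
      by auto
    also have "\<dots> = (if m \<le> k \<and> k < 2 * m then - (sg A (k - m) * \<nu>) else 0)" by auto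
    finally show ?thesis by simp
  qed
  also have "\<dots> = bb m \<nu> (tau m A k)"
    using m unfolding bb_def tau_def sg_def by auto
  finally show ?thesis by simp
qed

lemma S_flip:
  assumes m: "m \<ge> 1"
  shows "(\<Sum>j<i. bb m \<nu> (tau m A (\<sigma> j))) = Xr {..<m} (cc m \<nu> \<sigma> i) A"
proof -
  have "(\<Sum>j<i. bb m \<nu> (tau m A (\<sigma> j))) = (\<Sum>j<i. \<Sum>t<m. sg A t * ((if \<sigma> j = t then \<nu> else 0) + (if \<sigma> j = m + t then - \<nu> else 0)))"
    using bb_tau_sum[OF m] by simp
  also have "\<dots> = (\<Sum>t<m. \<Sum>j<i. sg A t * ((if \<sigma> j = t then \<nu> else 0) + (if \<sigma> j = m + t then - \<nu> else 0)))"
    by (rule sum.swap)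
  also have "\<dots> = Xr {..<m} (cc m \<nu> \<sigma> i) A"
    unfolding Xr_def cc_def by (simp add: sum_distrib_left)
  finally show ?thesis .
qed

lemma delta_lt: "(\<Sum>j<(i::nat). if j = a then (1::real) else 0) = (if a < i then 1 else 0)"
  by (simp add: sum.delta)

lemma ind_count:
  fixes \<sigma> :: "nat \<Rightarrow> nat" and i t :: nat
  assumes "\<sigma> permutes {..<n}"
  shows "(\<Sum>j<i. (if \<sigma> j = t then (1::real) else 0)) = (if inv \<sigma> t < i then 1 else 0)"
proof -
  have "(\<Sum>j<i. (if \<sigma> j = t then (1::real) else 0)) = (\<Sum>j<i. (if j = inv \<sigma> t then 1 else 0))"
    using permutes_inv_eq[OF assms] by (intro sum.cong refl) metis
  also have "\<dots> = (if inv \<sigma> t < i then 1 else 0)" by (rule delta_lt)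
  finally show ?thesis .
qed

lemma cc_eq:
  fixes \<sigma> :: "nat \<Rightarrow> nat" and i t :: nat
  assumes "\<sigma> permutes {..<n}"
  shows "cc m \<nu> \<sigma> i t = \<nu> * ((if inv \<sigma> t < i then 1 else 0) - (if inv \<sigma> (m + t) < i then 1 else 0))"
proof -
  have "cc m \<nu> \<sigma> i t = \<nu> * (\<Sum>j<i. (if \<sigma> j = t then (1::real) else 0)) - \<nu> * (\<Sum>j<i. (if \<sigma> j = m + t then (1::real) else 0))"
  proof -
    have "cc m \<nu> \<sigma> i t = (\<Sum>j<i. \<nu> * (if \<sigma> j = t then (1::real) else 0) - \<nu> * (if \<sigma> j = m + t then (1::real) else 0))"
      unfolding cc_def by (intro sum.cong refl) auto
    then show ?thesis by (simp add: sum_subtractf sum_distrib_left)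
  qed
  then show ?thesis using ind_count[OF assms] by (simp add: algebra_simps)
qed

lemma cut_count:
  assumes "p < n" "q < n"
  shows "(\<Sum>i<n. (if (p < i) \<noteq> (q < i) then (1::real) else 0)) = \<bar>real p - real q\<bar>"
proof -
  have "(\<Sum>i<n. (if (p < i) \<noteq> (q < i) then (1::real) else 0)) = (\<Sum>i\<in>{i\<in>{..<n}. (p < i) \<noteq> (q < i)}. (1::real))"
    by (rule sum.inter_filter[symmetric]) simp
  also have "{i\<in>{..<n}. (p < i) \<noteq> (q < i)} = {min p q<..max p q}" using assms by auto
  also have "(\<Sum>i\<in>{min p q<..max p q}. (1::real)) = \<bar>real p - real q\<bar>"
    by (cases "p \<le> q") (auto simp: min_def max_def of_nat_diff)
  finally show ?thesis .
qed

lemma cc_sq_sum: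
  assumes \<sigma>: "\<sigma> permutes {..<n}" and t: "m + t < n"
  shows "(\<Sum>i<n. (cc m \<nu> \<sigma> i t)^2) = \<nu>^2 * \<bar>real (inv \<sigma> t) - real (inv \<sigma> (m + t))\<bar>"
proof -
  have inv_lt: "inv \<sigma> k < n" if "k < n" for k
    using permutes_inv[OF \<sigma>] that permutes_in_image by fastforce
  have "(cc m \<nu> \<sigma> i t)^2 = \<nu>^2 * (if (inv \<sigma> t < i) \<noteq> (inv \<sigma> (m + t) < i) then 1 else 0)" for i
    unfolding cc_eq[OF \<sigma>] by (auto simp: power2_eq_square)
  then have "(\<Sum>i<n. (cc m \<nu> \<sigma> i t)^2) = \<nu>^2 * (\<Sum>i<n. (if (inv \<sigma> t < i) \<noteq> (inv \<sigma> (m + t) < i) then 1 else 0))"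
    by (simp add: sum_distrib_left)
  also have "\<dots> = \<nu>^2 * \<bar>real (inv \<sigma> t) - real (inv \<sigma> (m + t))\<bar>"
    using t by (subst cut_count) (auto intro!: inv_lt)
  finally show ?thesis .
qed

lemma cc_sq_le: "(cc m \<nu> \<sigma> i t)^2 \<le> \<nu>^2" if "\<sigma> permutes {..<n}" for \<sigma>
  unfolding cc_eq[OF that] by (auto simp: power2_eq_square)

lemma bb_sum:
  assumes "2 * m \<le> n" shows "(\<Sum>k<n. bb m \<nu> k) = 0"
proof -
  have "(\<Sum>k<n. bb m \<nu> k) = (\<Sum>k\<in>{0..<m}. bb m \<nu> k) + (\<Sum>k\<in>{m..<2*m}. bb m \<nu> k) + (\<Sum>k\<in>{2*m..<n}. bb m \<nu> k)"
    using assms by (simp add: sum.atLeastLessThan_concat atLeast0LessThan[symmetric])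
  also have "\<dots> = m * \<nu> + m * (- \<nu>) + 0" unfolding bb_def by simp
  finally show ?thesis by simp
qed


definition Qp :: "nat \<Rightarrow> (nat \<Rightarrow> nat) \<Rightarrow> real" where
  "Qp m \<sigma> = (\<Sum>t<m. \<bar>real (inv \<sigma> t) - real (inv \<sigma> (m + t))\<bar>)"

lemma flip_sigma:
  fixes \<sigma> :: "nat \<Rightarrow> nat"
  assumes m1: "m \<ge> 1" and mn: "2 * m \<le> n" and L: "L > 0" and eta: "\<eta> > 0" and nu: "\<nu> > 0"
    and small: "\<eta> * L * n \<le> 1/64" and \<sigma>: "\<sigma> permutes {..<n}"
  shows "(\<Sum>A\<in>Pow {..<m}. run1 L \<eta> (\<lambda>j. bb m \<nu> (tau m A (\<sigma> j))) y n)
     \<ge> 2 ^ m * ((1 - (3/4 * \<eta> * L * n + 2 * (\<eta> * L * n)^2)) * y + 45/512 * \<eta>^2 * L * \<nu> * Qp m \<sigma> / sqrt m)"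
proof -
  define E where "E = Pow {..<m}"
  define c where "c = (\<lambda>A::nat set. {..<m} - A)"
  define S where "S = (\<lambda>A i. (\<Sum>j<i. bb m \<nu> (tau m A (\<sigma> j))))"
  define R where "R = (\<lambda>A. run1 L \<eta> (\<lambda>j. bb m \<nu> (tau m A (\<sigma> j))) y n)"
  have SX: "S A i = Xr {..<m} (cc m \<nu> \<sigma> i) A" for A i unfolding S_def by (rule S_flip[OF m1])
  have fin: "finite E" unfolding E_def by simp
  have c1: "c A \<in> E" if "A \<in> E" for A using that unfolding c_def E_def by auto
  have c2: "c (c A) = A" if "A \<in> E" for A using that unfolding c_def E_def by auto
  have Sc: "S (c A) i = - S A i" if "A \<in> E" for A i
    unfolding SX c_def using that unfolding E_def by (intro Xr_compl) auto
  have bound: "R A \<ge> y - \<eta> * (L/2) * n * y + \<eta> * (L/2) * (\<Sum>i<n. max (\<eta> * S A i - y) 0)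
          + \<eta>^2 * (L/2) * (\<Sum>i<n. S A i) - 2 * \<eta>^2 * L^2 * n * (\<Sum>i<n. \<bar>y - \<eta> * S A i\<bar>)" for A
  proof -
    have p: "tau m A \<circ> \<sigma> permutes {..<n}" by (intro permutes_compose \<sigma> tau_permutes mn)
    have "(\<Sum>j<n. bb m \<nu> (tau m A (\<sigma> j))) = (\<Sum>j<n. bb m \<nu> j)"
      using sum.permute[OF p, of "bb m \<nu>"] by (simp add: o_def)
    also have "\<dots> = 0" by (rule bb_sum[OF mn])
    finally have z: "(\<Sum>j<n. bb m \<nu> (tau m A (\<sigma> j))) = 0" .
    show ?thesis unfolding R_def S_def by (rule run1_epoch[OF L eta small z])
  qed
  have main: "(\<Sum>A\<in>E. R A) \<ge> card E * ((1 - (3/4 * \<eta> * L * n + 2 * (\<eta> * L * n)^2)) * y)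
            + 5/32 * \<eta>^2 * L * (\<Sum>A\<in>E. \<Sum>i<n. \<bar>S A i\<bar>)"
    by (rule flip_avg[where E=E and c=c and S=S and R=R and L=L and n=n and y=y and \<eta>=\<eta>, OF fin c1 c2 Sc L eta small bound])
  have cardE: "card E = 2 ^ m" unfolding E_def by (simp add: card_Pow)
  define M where "M = 2 * \<nu> * sqrt m"
  have M0: "M > 0" unfolding M_def using nu m1 by auto
  have kh: "(\<Sum>A\<in>E. \<bar>S A i\<bar>) \<ge> 2 ^ m * (9/8 * (\<Sum>t<m. (cc m \<nu> \<sigma> i t)^2) / M)" for i
  proof -
    have "(\<Sum>t<m. (cc m \<nu> \<sigma> i t)^2) \<le> (\<Sum>t<m. \<nu>^2)" by (intro sum_mono cc_sq_le[OF \<sigma>])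
    also have "\<dots> = M^2 / 4" unfolding M_def using m1 by (simp add: power2_eq_square)
    finally have "(\<Sum>t<m. (cc m \<nu> \<sigma> i t)^2) \<le> M^2 / 4" .
    then show ?thesis unfolding E_def SX using khintchine[OF _ M0, of "{..<m}" "cc m \<nu> \<sigma> i"] by simp
  qed
  have "(\<Sum>A\<in>E. \<Sum>i<n. \<bar>S A i\<bar>) = (\<Sum>i<n. \<Sum>A\<in>E. \<bar>S A i\<bar>)" by (rule sum.swap)
  also have "\<dots> \<ge> (\<Sum>i<n. 2 ^ m * (9/8 * (\<Sum>t<m. (cc m \<nu> \<sigma> i t)^2) / M))" by (intro sum_mono kh)
  also have "(\<Sum>i<n. 2 ^ m * (9/8 * (\<Sum>t<m. (cc m \<nu> \<sigma> i t)^2) / M)) = 2 ^ m * (9/8 / M) * (\<Sum>t<m. \<Sum>i<n. (cc m \<nu> \<sigma> i t)^2)"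
    by (simp add: sum_distrib_left sum_divide_distrib sum.swap[of _ "{..<m}"] algebra_simps)
  also have "(\<Sum>t<m. \<Sum>i<n. (cc m \<nu> \<sigma> i t)^2) = \<nu>^2 * Qp m \<sigma>"
    unfolding Qp_def sum_distrib_left using mn by (intro sum.cong refl cc_sq_sum[OF \<sigma>]) auto
  finally have T: "(\<Sum>A\<in>E. \<Sum>i<n. \<bar>S A i\<bar>) \<ge> 2 ^ m * (9/8 / M) * (\<nu>^2 * Qp m \<sigma>)" .
  have Q0: "Qp m \<sigma> \<ge> 0" unfolding Qp_def by (intro sum_nonneg) auto
  have "5/32 * \<eta>^2 * L * (\<Sum>A\<in>E. \<Sum>i<n. \<bar>S A i\<bar>) \<ge> 5/32 * \<eta>^2 * L * (2 ^ m * (9/8 / M) * (\<nu>^2 * Qp m \<sigma>))"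
    using T L by (intro mult_left_mono) auto
  also have "5/32 * \<eta>^2 * L * (2 ^ m * (9/8 / M) * (\<nu>^2 * Qp m \<sigma>)) = 2 ^ m * (45/512 * \<eta>^2 * L * \<nu> * Qp m \<sigma> / sqrt m)"
    unfolding M_def using nu m1 by (simp add: field_simps power2_eq_square)
  finally have 2: "5/32 * \<eta>^2 * L * (\<Sum>A\<in>E. \<Sum>i<n. \<bar>S A i\<bar>) \<ge> 2 ^ m * (45/512 * \<eta>^2 * L * \<nu> * Qp m \<sigma> / sqrt m)" .
  have "(\<Sum>A\<in>E. R A) \<ge> 2 ^ m * ((1 - (3/4 * \<eta> * L * n + 2 * (\<eta> * L * n)^2)) * y) + 2 ^ m * (45/512 * \<eta>^2 * L * \<nu> * Qp m \<sigma> / sqrt m)"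
  proof -
    have cE: "real (card E) = 2 ^ m" using cardE by simp
    from main have "(\<Sum>A\<in>E. R A) \<ge> 2 ^ m * ((1 - (3/4 * \<eta> * L * n + 2 * (\<eta> * L * n)^2)) * y)
            + 5/32 * \<eta>^2 * L * (\<Sum>A\<in>E. \<Sum>i<n. \<bar>S A i\<bar>)" by (simp only: cE)
    with 2 show ?thesis by linarith
  qed
  then show ?thesis unfolding R_def E_def by (simp add: algebra_simps)
qed

lemma perm_avg:
  fixes y :: real
  assumes m1: "m \<ge> 1" and mn: "2 * m \<le> n" and L: "L > 0" and eta: "\<eta> > 0" and nu: "\<nu> > 0"
    and small: "\<eta> * L * n \<le> 1/64"
  shows "(\<Sum>\<sigma>\<in>{\<sigma>. \<sigma> permutes {..<n}}. run1 L \<eta> (\<lambda>j. bb m \<nu> (\<sigma> j)) y n)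
     \<ge> (\<Sum>\<sigma>\<in>{\<sigma>. \<sigma> permutes {..<n}}. (1 - (3/4 * \<eta> * L * n + 2 * (\<eta> * L * n)^2)) * y + 45/512 * \<eta>^2 * L * \<nu> * Qp m \<sigma> / sqrt m)"
proof -
  define P where "P = {\<sigma>::nat\<Rightarrow>nat. \<sigma> permutes {..<n}}"
  define F where "F = (\<lambda>\<sigma>. run1 L \<eta> (\<lambda>j. bb m \<nu> (\<sigma> j)) y n)"
  have e: "(\<Sum>\<sigma>\<in>P. F \<sigma>) = (\<Sum>\<sigma>\<in>P. F (tau m A \<circ> \<sigma>))" for A
    unfolding P_def by (rule setum_permutations_compose_left[OF tau_permutes[OF mn]])
  have "2 ^ m * (\<Sum>\<sigma>\<in>P. F \<sigma>) = (\<Sum>A\<in>Pow {..<m}. \<Sum>\<sigma>\<in>P. F \<sigma>)" by (simp add: card_Pow)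
  also have "\<dots> = (\<Sum>A\<in>Pow {..<m}. \<Sum>\<sigma>\<in>P. F (tau m A \<circ> \<sigma>))" using e by simp
  also have "\<dots> = (\<Sum>\<sigma>\<in>P. \<Sum>A\<in>Pow {..<m}. F (tau m A \<circ> \<sigma>))" by (rule sum.swap)
  also have "\<dots> \<ge> (\<Sum>\<sigma>\<in>P. 2 ^ m * ((1 - (3/4 * \<eta> * L * n + 2 * (\<eta> * L * n)^2)) * y + 45/512 * \<eta>^2 * L * \<nu> * Qp m \<sigma> / sqrt m))"
    unfolding F_def P_def using flip_sigma[OF m1 mn L eta nu small] by (intro sum_mono) (simp add: o_def)
  finally show ?thesis unfolding P_def F_def by (simp add: sum_distrib_left[symmetric])
qed


lemma far_elem:
  fixes Q :: "nat set"
  assumes fin: "finite Q" and p: "p \<notin> Q" and ne: "Q \<noteq> {}"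
  shows "\<exists>q\<in>Q. 2 * \<bar>real p - real q\<bar> \<ge> card Q"
proof (rule ccontr)
  assume "\<not> ?thesis"
  then have lt: "2 * \<bar>real p - real q\<bar> < card Q" if "q \<in> Q" for q using that by force
  define h where "h = (card Q - 1) div 2"
  have sub: "Q \<subseteq> {p - h..<p} \<union> {p<..p + h}"
  proof
    fix q assume q: "q \<in> Q"
    have l: "2 * \<bar>real p - real q\<bar> < card Q" using lt q .
    have "q \<noteq> p" using p q by auto
    moreover have "q < p \<Longrightarrow> p - q \<le> h"
    proof -
      assume qp: "q < p"
      then have "real (2 * (p - q)) < real (card Q)" using l by (simp add: of_nat_diff)
      then have "2 * (p - q) < card Q" by linarith
      then show "p - q \<le> h" unfolding h_def by linarith
    qed
    moreover have "p < q \<Longrightarrow> q - p \<le> h"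
    proof -
      assume qp: "p < q"
      then have "real (2 * (q - p)) < real (card Q)" using l by (simp add: of_nat_diff)
      then have "2 * (q - p) < card Q" by linarith
      then show "q - p \<le> h" unfolding h_def by linarith
    qed
    ultimately show "q \<in> {p - h..<p} \<union> {p<..p + h}" by auto
  qed
  have "card Q \<le> card ({p - h..<p} \<union> {p<..p + h})" by (rule card_mono) (use sub in auto)
  also have "\<dots> \<le> card {p - h..<p} + card {p<..p + h}" by (rule card_Un_le)
  also have "\<dots> \<le> h + h" by simp
  also have "\<dots> < card Q"
  proof -
    have "card Q > 0" using ne fin by (simp add: card_gt_0_iff)
    then show ?thesis unfolding h_def by presburger
  qed
  finally show False by simp
qed

lemma dist_sum:
  fixes Q :: "nat set"
  assumes "finite Q" "p \<notin> Q"
  shows "(\<Sum>q\<in>Q. \<bar>real p - real q\<bar>) \<ge> card Q * (card Q + 1) / 4"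
  using assms
proof (induction "card Q" arbitrary: Q)
  case 0
  then show ?case by simp
next
  case (Suc k)
  then have ne: "Q \<noteq> {}" by auto
  obtain q0 where q0: "q0 \<in> Q" "2 * \<bar>real p - real q0\<bar> \<ge> card Q" using far_elem[OF Suc.prems ne] by blast
  have ck: "card (Q - {q0}) = k" using Suc.hyps(2) q0(1) Suc.prems by simp
  have IH: "(\<Sum>q\<in>Q - {q0}. \<bar>real p - real q\<bar>) \<ge> k * (k + 1) / 4"
    using Suc.hyps(1)[of "Q - {q0}"] ck Suc.prems by auto
  have "(\<Sum>q\<in>Q. \<bar>real p - real q\<bar>) = \<bar>real p - real q0\<bar> + (\<Sum>q\<in>Q - {q0}. \<bar>real p - real q\<bar>)"
    using Suc.prems q0(1) by (simp add: sum.remove)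
  moreover have "real (card Q) = k + 1" using Suc.hyps(2) by simp
  ultimately show ?case using IH q0(2) by (simp add: field_simps)
qed

lemma pair_swap_sum:
  fixes m n t u :: nat
  assumes mn: "2 * m \<le> n" and t: "t < m" and u: "u < m"
  shows "(\<Sum>\<sigma>\<in>{\<sigma>. \<sigma> permutes {..<n}}. \<bar>real (inv \<sigma> t) - real (inv \<sigma> (m + t))\<bar>)
       = (\<Sum>\<sigma>\<in>{\<sigma>. \<sigma> permutes {..<n}}. \<bar>real (inv \<sigma> t) - real (inv \<sigma> (m + u))\<bar>)"
proof -
  define \<kappa> where "\<kappa> = Transposition.transpose (m + t) (m + u)"
  have k: "\<kappa> permutes {..<n}" unfolding \<kappa>_def using mn t u by (intro permutes_swap_id) auto
  have "(\<Sum>\<sigma>\<in>{\<sigma>. \<sigma> permutes {..<n}}. \<bar>real (inv \<sigma> t) - real (inv \<sigma> (m + t))\<bar>)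
     = (\<Sum>\<sigma>\<in>{\<sigma>. \<sigma> permutes {..<n}}. \<bar>real (inv (\<kappa> \<circ> \<sigma>) t) - real (inv (\<kappa> \<circ> \<sigma>) (m + t))\<bar>)"
    by (rule setum_permutations_compose_left[OF k])
  also have "\<dots> = (\<Sum>\<sigma>\<in>{\<sigma>. \<sigma> permutes {..<n}}. \<bar>real (inv \<sigma> t) - real (inv \<sigma> (m + u))\<bar>)"
  proof (intro sum.cong refl)
    fix \<sigma> assume "\<sigma> \<in> {\<sigma>. \<sigma> permutes {..<n}}"
    then have bs: "bij \<sigma>" by (auto intro: permutes_bij)
    have bk: "bij \<kappa>" using k by (rule permutes_bij)
    have i: "inv (\<kappa> \<circ> \<sigma>) = inv \<sigma> \<circ> \<kappa>" using o_inv_distrib[OF bk bs] unfolding \<kappa>_def by simp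
    have "\<kappa> t = t" "\<kappa> (m + t) = m + u" unfolding \<kappa>_def using t by auto
    then show "\<bar>real (inv (\<kappa> \<circ> \<sigma>) t) - real (inv (\<kappa> \<circ> \<sigma>) (m + t))\<bar> = \<bar>real (inv \<sigma> t) - real (inv \<sigma> (m + u))\<bar>"
      unfolding i by simp
  qed
  finally show ?thesis .
qed

lemma Qp_avg:
  fixes m n :: nat
  assumes m1: "m \<ge> 1" and mn: "2 * m \<le> n"
  shows "(\<Sum>\<sigma>\<in>{\<sigma>. \<sigma> permutes {..<n}}. Qp m \<sigma>) \<ge> card {\<sigma>. \<sigma> permutes {..<n}} * (m * (m + 1) / 4)"
proof -
  define P where "P = {\<sigma>::nat\<Rightarrow>nat. \<sigma> permutes {..<n}}"
  define d where "d = (\<lambda>\<sigma> t u. \<bar>real (inv \<sigma> t) - real (inv \<sigma> (m + u))\<bar>)"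
  have "(\<Sum>\<sigma>\<in>P. Qp m \<sigma>) = (\<Sum>t<m. \<Sum>\<sigma>\<in>P. d \<sigma> t t)"
    unfolding Qp_def d_def by (rule sum.swap)
  also have "\<dots> = (\<Sum>t<m. (1 / m) * (\<Sum>u<m. \<Sum>\<sigma>\<in>P. d \<sigma> t u))"
  proof (intro sum.cong refl)
    fix t assume t: "t \<in> {..<m}"
    have "(\<Sum>u<m. \<Sum>\<sigma>\<in>P. d \<sigma> t u) = (\<Sum>u<m. \<Sum>\<sigma>\<in>P. d \<sigma> t t)"
    proof (rule sum.cong[OF refl])
      fix u assume u: "u \<in> {..<m}"
      show "(\<Sum>\<sigma>\<in>P. d \<sigma> t u) = (\<Sum>\<sigma>\<in>P. d \<sigma> t t)"
        unfolding P_def d_def using pair_swap_sum[OF mn, of t u] t u by simp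
    qed
    also have "\<dots> = m * (\<Sum>\<sigma>\<in>P. d \<sigma> t t)" by simp
    finally show "(\<Sum>\<sigma>\<in>P. d \<sigma> t t) = (1 / m) * (\<Sum>u<m. \<Sum>\<sigma>\<in>P. d \<sigma> t u)" using m1 by simp
  qed
  also have "\<dots> = (1 / m) * (\<Sum>\<sigma>\<in>P. \<Sum>t<m. \<Sum>u<m. d \<sigma> t u)"
  proof -
    have "(\<Sum>t<m. \<Sum>u<m. \<Sum>\<sigma>\<in>P. d \<sigma> t u) = (\<Sum>t<m. \<Sum>\<sigma>\<in>P. \<Sum>u<m. d \<sigma> t u)"
      by (intro sum.cong refl, rule sum.swap)
    also have "\<dots> = (\<Sum>\<sigma>\<in>P. \<Sum>t<m. \<Sum>u<m. d \<sigma> t u)" by (rule sum.swap)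
    finally have sw: "(\<Sum>t<m. \<Sum>u<m. \<Sum>\<sigma>\<in>P. d \<sigma> t u) = (\<Sum>\<sigma>\<in>P. \<Sum>t<m. \<Sum>u<m. d \<sigma> t u)" .
    have "(\<Sum>t<m. (1 / m) * (\<Sum>u<m. \<Sum>\<sigma>\<in>P. d \<sigma> t u)) = (1 / m) * (\<Sum>t<m. \<Sum>u<m. \<Sum>\<sigma>\<in>P. d \<sigma> t u)"
      by (rule sum_distrib_left[symmetric])
    then show ?thesis unfolding sw .
  qed
  also have "\<dots> \<ge> (1 / m) * (\<Sum>\<sigma>\<in>P. \<Sum>t<m. m * (m + 1) / 4)"
  proof (intro mult_left_mono sum_mono)
    fix \<sigma> t assume \<sigma>: "\<sigma> \<in> P" and t: "t \<in> {..<m}"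
    then have bs: "bij \<sigma>" unfolding P_def by (auto intro: permutes_bij)
    have inj: "inj (inv \<sigma>)" using bs by (simp add: bij_imp_bij_inv bij_is_inj)
    define Qs where "Qs = (\<lambda>u. inv \<sigma> (m + u)) ` {..<m}"
    have injQ: "inj_on (\<lambda>u. inv \<sigma> (m + u)) {..<m}"
    proof (rule inj_onI)
      fix x y assume "inv \<sigma> (m + x) = inv \<sigma> (m + y)"
      then have "m + x = m + y" by (rule injD[OF inj])
      then show "x = y" by simp
    qed
    have cQ: "card Qs = m" unfolding Qs_def using card_image[OF injQ] by simp
    have pQ: "inv \<sigma> t \<notin> Qs" unfolding Qs_def using inj t by (auto dest: injD)
    have "(\<Sum>u<m. d \<sigma> t u) = (\<Sum>q\<in>Qs. \<bar>real (inv \<sigma> t) - real q\<bar>)"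
      unfolding Qs_def d_def by (simp add: sum.reindex[OF injQ])
    also have "\<dots> \<ge> card Qs * (card Qs + 1) / 4" by (rule dist_sum) (use pQ Qs_def in auto)
    finally show "(\<Sum>u<m. d \<sigma> t u) \<ge> m * (m + 1) / 4" using cQ by simp
  qed simp
  also have "(1 / m) * (\<Sum>\<sigma>\<in>P. \<Sum>t<m. m * (m + 1) / 4) = card P * (m * (m + 1) / 4)"
    using m1 by simp
  finally show ?thesis unfolding P_def .
qed


definition Gf :: "real \<Rightarrow> real \<Rightarrow> real" where
  "Gf L t = 3/8 * L * t^2 - L/8 * (t * \<bar>t\<bar>)"

lemma tabs_deriv: "((\<lambda>t::real. t * \<bar>t\<bar>) has_real_derivative 2 * \<bar>x\<bar>) (at x)"
proof (cases "x = 0")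
  case True
  have "((\<lambda>y. (y * \<bar>y\<bar> - x * \<bar>x\<bar>) / (y - x)) \<longlongrightarrow> 2 * \<bar>x\<bar>) (at x)"
  proof -
    have ev: "\<forall>\<^sub>F y in at x. \<bar>y\<bar> = (y * \<bar>y\<bar> - x * \<bar>x\<bar>) / (y - x)"
      unfolding True eventually_at_filter by (auto intro!: always_eventually)
    have "((\<lambda>y. \<bar>y\<bar>) \<longlongrightarrow> \<bar>x\<bar>) (at x)" by (intro tendsto_intros)
    then have "((\<lambda>y::real. \<bar>y\<bar>) \<longlongrightarrow> 2 * \<bar>x\<bar>) (at x)" using True by simp
    then show ?thesis using ev by (rule Lim_transform_eventually)
  qed
  then show ?thesis by (simp add: has_field_derivative_iff)
next
  case False
  show ?thesis
  proof (cases "x > 0")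
    case True
    have d: "((\<lambda>t::real. t * t) has_real_derivative 2 * \<bar>x\<bar>) (at x)"
      using True by (auto intro!: derivative_eq_intros)
    show ?thesis
      by (rule has_field_derivative_transform_within_open[OF d, of "{0<..}"]) (use True in auto)
  next
    case neg: False
    then have xn: "x < 0" using False by simp
    have d: "((\<lambda>t::real. - (t * t)) has_real_derivative 2 * \<bar>x\<bar>) (at x)"
      using xn by (auto intro!: derivative_eq_intros)
    show ?thesis
      by (rule has_field_derivative_transform_within_open[OF d, of "{..<0}"]) (use xn in auto)
  qed
qed

lemma Gf_deriv: "(Gf L has_real_derivative Gd L x) (at x)"
proof -
  have d1: "((\<lambda>t::real. t^2) has_real_derivative 2 * x) (at x)" by (auto intro!: derivative_eq_intros)
  have d: "((\<lambda>t. 3/8 * L * t^2 - L/8 * (t * \<bar>t\<bar>)) has_real_derivative 3/8 * L * (2 * x) - L/8 * (2 * \<bar>x\<bar>)) (at x)"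
    by (rule DERIV_diff[OF DERIV_cmult[OF d1] DERIV_cmult[OF tabs_deriv]])
  have e1: "3/8 * L * (2 * x) - L/8 * (2 * \<bar>x\<bar>) = Gd L x" unfolding Gd_def by simp
  have e2: "(\<lambda>t. 3/8 * L * t^2 - L/8 * (t * \<bar>t\<bar>)) = Gf L" by (rule ext) (simp add: Gf_def)
  show ?thesis using d unfolding e1 e2 .
qed

lemma Gd_mono: "L \<ge> 0 \<Longrightarrow> x \<le> y \<Longrightarrow> Gd L x \<le> Gd L y"
proof -
  assume L: "L \<ge> 0" and xy: "x \<le> y"
  show ?thesis
  proof (cases "0 \<le> x")
    case True
    then show ?thesis unfolding Gd_eq using xy L by (auto intro: mult_left_mono)
  next
    case False
    then have "L * x \<le> 0" using L by (simp add: mult_nonneg_nonpos)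
    moreover have "y \<ge> 0 \<Longrightarrow> 0 \<le> L / 2 * y" using L by simp
    moreover have "L * x \<le> L * y" by (rule mult_left_mono[OF xy L])
    ultimately show ?thesis unfolding Gd_eq using False by auto
  qed
qed

lemma Gf_convex: "L \<ge> 0 \<Longrightarrow> convex_on UNIV (Gf L)"
  by (rule convex_on_realI[where f'="Gd L"]) (auto intro: Gf_deriv Gd_mono)

lemma Gf_lower: "L \<ge> 0 \<Longrightarrow> Gf L t \<ge> L/4 * (max t 0)^2"
proof -
  assume L: "L \<ge> 0"
  show ?thesis
  proof (cases "t \<ge> 0")
    case True
    then have "Gf L t = L/4 * t^2" unfolding Gf_def by (simp add: power2_eq_square)
    then show ?thesis using True by simp
  next
    case False
    then have "Gf L t = L/2 * t^2" unfolding Gf_def by (simp add: power2_eq_square)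
    moreover have "L/2 * t^2 \<ge> 0" using L by simp
    moreover have "max t 0 = 0" using False by simp
    ultimately show ?thesis by simp
  qed
qed

lemma Gf_nonneg: "L \<ge> 0 \<Longrightarrow> Gf L t \<ge> 0"
proof -
  assume L: "L \<ge> 0"
  have "L/4 * (max t 0)^2 \<ge> 0" using L by simp
  then show ?thesis using Gf_lower[OF L, of t] by linarith
qed

definition q2 :: "real \<Rightarrow> real \<Rightarrow> real \<Rightarrow> real^2 \<Rightarrow> real" where
  "q2 \<mu> L c x = \<mu>/2 * (x$1)^2 + Gf L (x$2) + c * x$2"

definition gq :: "real \<Rightarrow> real \<Rightarrow> real \<Rightarrow> real^2 \<Rightarrow> real^2" where
  "gq \<mu> L c x = vector [\<mu> * x$1, Gd L (x$2) + c]"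

lemma inner2: "(u::real^2) \<bullet> v = u$1 * v$1 + u$2 * v$2"
  unfolding inner_vec_def sum_2 by simp

lemma nth_comp_deriv:
  fixes x :: "real^'n"
  assumes "(g has_real_derivative D) (at (x$i))"
  shows "((\<lambda>x. g (x$i)) has_derivative (\<lambda>h. D * h$i)) (at x)"
proof -
  have l: "((\<lambda>x::real^'n. x$i) has_derivative (\<lambda>h. h$i)) (at x)"
    by (rule bounded_linear_imp_has_derivative) (rule bounded_linear_vec_nth)
  have g: "(g has_derivative (\<lambda>h. D * h)) (at (x$i))" using assms by (simp add: has_field_derivative_def mult_commute_abs)
  show ?thesis using has_derivative_compose[OF l g] by simp
qed

lemma q2_deriv: "(q2 \<mu> L c has_derivative (\<lambda>h. gq \<mu> L c x \<bullet> h)) (at x)"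
proof -
  have d1: "(power2 has_real_derivative 2 * x$1) (at (x$1))" by (auto intro!: derivative_eq_intros)
  have d2: "((\<lambda>t. c * t) has_real_derivative c) (at (x$2))" by (auto intro!: derivative_eq_intros)
  have "((\<lambda>x::real^2. \<mu>/2 * (x$1)^2 + Gf L (x$2) + c * x$2) has_derivative
        (\<lambda>h. \<mu>/2 * (2 * x$1 * h$1) + Gd L (x$2) * h$2 + c * h$2)) (at x)"
    by (intro has_derivative_add has_derivative_mult_right nth_comp_deriv[OF d1, simplified]
        nth_comp_deriv[OF Gf_deriv] nth_comp_deriv[OF d2, simplified])
  moreover have "(\<lambda>h. \<mu>/2 * (2 * x$1 * h$1) + Gd L (x$2) * h$2 + c * h$2) = (\<lambda>h. gq \<mu> L c x \<bullet> h)"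
    unfolding gq_def inner2 by (auto simp: algebra_simps)
  ultimately show ?thesis unfolding q2_def[abs_def] by simp
qed

lemma grad_eqI:
  fixes f :: "'a::real_inner \<Rightarrow> real"
  assumes "(f has_derivative (\<lambda>h. g \<bullet> h)) (at x)"
  shows "grad f x = g"
proof -
  have "\<And>g'. (f has_derivative (\<lambda>h. g' \<bullet> h)) (at x) \<Longrightarrow> g' = g"
  proof -
    fix g' assume "(f has_derivative (\<lambda>h. g' \<bullet> h)) (at x)"
    then have "(\<lambda>h. g' \<bullet> h) = (\<lambda>h. g \<bullet> h)" using assms by (rule has_derivative_unique)
    then have "g' \<bullet> (g' - g) = g \<bullet> (g' - g)" by metis
    then have "(g' - g) \<bullet> (g' - g) = 0" by (simp add: inner_diff_left)
    then show "g' = g" by simp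
  qed
  then show ?thesis unfolding grad_def using assms by (rule some_equality[rotated]) 
qed

lemma grad_q2: "grad (q2 \<mu> L c) x = gq \<mu> L c x"
  by (rule grad_eqI) (rule q2_deriv)

lemma norm2_sq: "(norm (v::real^2))^2 = (v$1)^2 + (v$2)^2"
  unfolding power2_norm_eq_inner inner2 by (simp add: power2_eq_square)

lemma gq_lip:
  assumes "0 \<le> \<mu>" "\<mu> \<le> L"
  shows "norm (gq \<mu> L c x - gq \<mu> L c y) \<le> L * norm (x - y)"
proof (rule power2_le_imp_le)
  have m2: "\<mu>^2 \<le> L^2" using assms by (intro power_mono) auto
  have a: "(\<mu> * (x$1 - y$1))^2 \<le> (L * (x$1 - y$1))^2"
    unfolding power_mult_distrib by (rule mult_right_mono[OF m2]) simp
  have b0: "\<bar>Gd L (x$2) - Gd L (y$2)\<bar> \<le> L * \<bar>x$2 - y$2\<bar>" using assms by (intro Gd_lip) auto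
  have b: "(Gd L (x$2) - Gd L (y$2))^2 \<le> (L * (x$2 - y$2))^2"
  proof -
    have "\<bar>Gd L (x$2) - Gd L (y$2)\<bar>^2 \<le> (L * \<bar>x$2 - y$2\<bar>)^2" using b0 by (intro power_mono) auto
    then show ?thesis using assms by (simp add: power2_abs abs_mult power_mult_distrib)
  qed
  have "(norm (gq \<mu> L c x - gq \<mu> L c y))^2 = (\<mu> * (x$1 - y$1))^2 + (Gd L (x$2) - Gd L (y$2))^2"
    unfolding norm2_sq gq_def by (simp add: algebra_simps)
  also have "\<dots> \<le> (L * (x$1 - y$1))^2 + (L * (x$2 - y$2))^2" using a b by linarith
  also have "\<dots> = (L * norm (x - y))^2" unfolding power_mult_distrib norm2_sq by (simp add: algebra_simps)
  finally show "(norm (gq \<mu> L c x - gq \<mu> L c y))^2 \<le> (L * norm (x - y))^2" .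
  show "0 \<le> L * norm (x - y)" using assms by simp
qed

lemma convex_nth:
  assumes "convex_on UNIV g"
  shows "convex_on UNIV (\<lambda>x::real^'n. g (x$i))"
proof (rule convex_onI)
  fix t :: real and x y :: "real^'n"
  assume "t > 0" "t < 1"
  then show "g (((1 - t) *\<^sub>R x + t *\<^sub>R y)$i) \<le> (1 - t) * g (x$i) + t * g (y$i)"
    using convex_onD[OF assms, of t "x$i" "y$i"] by simp
qed simp

lemma q2_convex:
  assumes "\<mu> \<ge> 0" "L \<ge> 0"
  shows "convex_on UNIV (q2 \<mu> L c)"
proof -
  have c1: "convex_on UNIV (\<lambda>t::real. \<mu>/2 * t^2)"
    using assms convex_power2 by (intro convex_on_cmul) auto
  have c3: "convex_on UNIV (\<lambda>t::real. c * t)"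
    by (rule convex_on_realI[where f'="\<lambda>_. c"]) (auto intro!: derivative_eq_intros)
  have "convex_on UNIV (\<lambda>x::real^2. \<mu>/2 * (x$1)^2 + Gf L (x$2) + c * x$2)"
    by (intro convex_on_add convex_nth[OF c1] convex_nth[OF Gf_convex] convex_nth[OF c3] assms)
  then show ?thesis unfolding q2_def[abs_def] .
qed

lemma q2_smooth:
  assumes "0 \<le> \<mu>" "\<mu> \<le> L"
  shows "smooth L (q2 \<mu> L c)"
  unfolding smooth_def grad_q2 using gq_lip[OF assms] q2_deriv
  by (auto simp: differentiable_def) blast


definition fam :: "real \<Rightarrow> real \<Rightarrow> nat \<Rightarrow> real \<Rightarrow> nat \<Rightarrow> real^2 \<Rightarrow> real" where
  "fam \<mu> L m \<nu> k = q2 \<mu> L (bb m \<nu> k)"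

lemma q2_shift: "q2 \<mu> L c x = q2 \<mu> L 0 x + c * x$2"
  unfolding q2_def by simp

lemma Fsum_fam:
  assumes "n > 0" "2 * m \<le> n"
  shows "Fsum n (fam \<mu> L m \<nu>) = q2 \<mu> L 0"
proof
  fix x
  have "(\<Sum>k<n. fam \<mu> L m \<nu> k x) = (\<Sum>k<n. q2 \<mu> L 0 x + bb m \<nu> k * x$2)"
    unfolding fam_def by (subst q2_shift) simp
  also have "\<dots> = n * q2 \<mu> L 0 x + (\<Sum>k<n. bb m \<nu> k) * x$2"
    by (simp add: sum.distrib sum_distrib_right)
  also have "\<dots> = n * q2 \<mu> L 0 x" using bb_sum[OF assms(2)] by simp
  finally show "Fsum n (fam \<mu> L m \<nu>) x = q2 \<mu> L 0 x" unfolding Fsum_def using assms by simp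
qed

lemma bb_abs: "\<nu> \<ge> 0 \<Longrightarrow> \<bar>bb m \<nu> k\<bar> \<le> \<nu>"
  unfolding bb_def by auto

lemma fam_fclass:
  assumes n: "n > 0" "2 * m \<le> n" and mu: "0 \<le> \<mu>" "\<mu> \<le> L" and nu: "\<nu> \<ge> 0"
  shows "fclass n L 0 0 \<nu> (fam \<mu> L m \<nu>)"
proof -
  have L: "L \<ge> 0" using mu by simp
  have F: "Fsum n (fam \<mu> L m \<nu>) = q2 \<mu> L 0" by (rule Fsum_fam[OF n])
  have dev: "norm (grad (fam \<mu> L m \<nu> i) x - grad (Fsum n (fam \<mu> L m \<nu>)) x) \<le> \<nu>" for i x
  proof -
    have "grad (fam \<mu> L m \<nu> i) x - grad (Fsum n (fam \<mu> L m \<nu>)) x = gq \<mu> L (bb m \<nu> i) x - gq \<mu> L 0 x"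
      unfolding F fam_def grad_q2 ..
    moreover have "(norm (gq \<mu> L (bb m \<nu> i) x - gq \<mu> L 0 x))^2 = (bb m \<nu> i)^2"
      unfolding norm2_sq gq_def by simp
    ultimately have "norm (grad (fam \<mu> L m \<nu> i) x - grad (Fsum n (fam \<mu> L m \<nu>)) x) = \<bar>bb m \<nu> i\<bar>"
      by (metis norm_ge_zero power2_abs abs_ge_zero power2_eq_iff_nonneg)
    then show ?thesis using bb_abs[OF nu] by simp
  qed
  show ?thesis unfolding fclass_def strongly_convex_def
    using q2_smooth[OF mu] q2_convex[OF mu(1) L] dev unfolding F fam_def by simp
qed

lemma iter_coords:
  fixes x :: "real^2"
  shows "(inner_iter (fam \<mu> L m \<nu>) \<eta> \<sigma> x i)$1 = (1 - \<eta> * \<mu>)^i * x$1"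
    and "(inner_iter (fam \<mu> L m \<nu>) \<eta> \<sigma> x i)$2 = run1 L \<eta> (\<lambda>j. bb m \<nu> (\<sigma> j)) (x$2) i"
proof (induction i)
  case 0
  { case 1 show ?case by simp }
  { case 2 show ?case by simp }
next
  case (Suc i)
  { case 1 show ?case using Suc.IH(1) unfolding fam_def by (simp add: grad_q2 gq_def algebra_simps) }
  { case 2 show ?case using Suc.IH(2) unfolding fam_def by (simp add: grad_q2 gq_def algebra_simps) }
qed

fun epv :: "real \<Rightarrow> real \<Rightarrow> nat \<Rightarrow> real \<Rightarrow> nat \<Rightarrow> (nat \<Rightarrow> nat \<Rightarrow> nat) \<Rightarrow> real \<Rightarrow> nat \<Rightarrow> real" where
  "epv L \<eta> m \<nu> n s y0 0 = y0"
| "epv L \<eta> m \<nu> n s y0 (Suc k) = run1 L \<eta> (\<lambda>j. bb m \<nu> (s (Suc k) j)) (epv L \<eta> m \<nu> n s y0 k) n"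

lemma epoch_coords:
  fixes x :: "real^2"
  shows "(epoch_start n (fam \<mu> L m \<nu>) \<eta> s x k)$1 = (1 - \<eta> * \<mu>)^(n * k) * x$1"
    and "(epoch_start n (fam \<mu> L m \<nu>) \<eta> s x k)$2 = epv L \<eta> m \<nu> n s (x$2) k"
proof (induction k)
  case 0
  { case 1 show ?case by simp }
  { case 2 show ?case by simp }
next
  case (Suc k)
  { case 1 show ?case using Suc.IH(1) by (simp add: iter_coords power_add mult_ac) }
  { case 2 show ?case using Suc.IH(2) by (simp add: iter_coords) }
qed

lemma epv_local:
  assumes "\<And>i. 1 \<le> i \<Longrightarrow> i \<le> k \<Longrightarrow> s i = s' i"
  shows "epv L \<eta> m \<nu> n s y0 k = epv L \<eta> m \<nu> n s' y0 k"
  using assms by (induction k) auto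


lemma perm_level:
  fixes y :: real
  assumes m1: "m \<ge> 1" and mn: "2 * m \<le> n" and L: "L > 0" and eta: "\<eta> > 0" and nu: "\<nu> > 0"
    and small: "\<eta> * L * n \<le> 1/64"
  shows "(\<Sum>\<sigma>\<in>{\<sigma>. \<sigma> permutes {..<n}}. run1 L \<eta> (\<lambda>j. bb m \<nu> (\<sigma> j)) y n)
     \<ge> card {\<sigma>. \<sigma> permutes {..<n}} * ((1 - (3/4 * \<eta> * L * n + 2 * (\<eta> * L * n)^2)) * y
          + 45/512 * \<eta>^2 * L * \<nu> / sqrt m * (m * (m + 1) / 4))"
proof -
  define P where "P = {\<sigma>::nat\<Rightarrow>nat. \<sigma> permutes {..<n}}"
  define \<kappa> where "\<kappa> = 45/512 * \<eta>^2 * L * \<nu> / sqrt m"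
  have k0: "\<kappa> \<ge> 0" unfolding \<kappa>_def using L nu by simp
  have "card P * ((1 - (3/4 * \<eta> * L * n + 2 * (\<eta> * L * n)^2)) * y) + \<kappa> * (card P * (m * (m + 1) / 4))
      \<le> card P * ((1 - (3/4 * \<eta> * L * n + 2 * (\<eta> * L * n)^2)) * y) + \<kappa> * (\<Sum>\<sigma>\<in>P. Qp m \<sigma>)"
    using Qp_avg[OF m1 mn] k0 unfolding P_def by (intro add_left_mono mult_left_mono) auto
  also have "\<dots> = (\<Sum>\<sigma>\<in>P. (1 - (3/4 * \<eta> * L * n + 2 * (\<eta> * L * n)^2)) * y + \<kappa> * Qp m \<sigma>)"
    by (simp add: sum.distrib sum_distrib_left)
  also have "\<dots> \<le> (\<Sum>\<sigma>\<in>P. run1 L \<eta> (\<lambda>j. bb m \<nu> (\<sigma> j)) y n)"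
    using perm_avg[OF m1 mn L eta nu small, of y] unfolding P_def \<kappa>_def by (simp add: mult_ac)
  finally show ?thesis unfolding P_def \<kappa>_def by (simp add: algebra_simps)
qed

lemma sum_PiE_split:
  assumes fin: "finite I" and a: "a \<in> I" and finB: "\<And>i. finite (B i)"
  shows "(\<Sum>s\<in>PiE I B. h s) = (\<Sum>x\<in>B a. \<Sum>g\<in>PiE (I - {a}) B. h (g(a := x)))"
proof -
  have I: "I = insert a (I - {a})" using a by auto
  have na: "a \<notin> I - {a}" by simp
  have "(\<Sum>s\<in>PiE I B. h s) = (\<Sum>s\<in>PiE (insert a (I - {a})) B. h s)" using I by simp
  also have "\<dots> = (\<Sum>s\<in>(\<lambda>(y, g). g(a := y)) ` (B a \<times> PiE (I - {a}) B). h s)"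
    unfolding PiE_insert_eq ..
  also have "\<dots> = (\<Sum>p\<in>B a \<times> PiE (I - {a}) B. h ((\<lambda>(y, g). g(a := y)) p))"
    by (rule sum.reindex[OF inj_combinator[OF na], unfolded o_def])
  also have "\<dots> = (\<Sum>(x, g)\<in>B a \<times> PiE (I - {a}) B. h (g(a := x)))"
    by (intro sum.cong refl) auto
  also have "\<dots> = (\<Sum>x\<in>B a. \<Sum>g\<in>PiE (I - {a}) B. h (g(a := x)))"
    by (rule sum.cartesian_product[symmetric])
  finally show ?thesis .
qed

lemma epoch_rec:
  fixes y0 :: real
  assumes m1: "m \<ge> 1" and mn: "2 * m \<le> n" and L: "L > 0" and eta: "\<eta> > 0" and nu: "\<nu> > 0"
    and small: "\<eta> * L * n \<le> 1/64" and j: "j < K"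
  defines "\<rho> \<equiv> 3/4 * \<eta> * L * n + 2 * (\<eta> * L * n)^2"
    and "C \<equiv> (45/512 * \<eta>^2 * L * \<nu> / sqrt m * (m * (m + 1) / 4) :: real)"
  shows "(\<Sum>s\<in>perm_seqs n K. epv L \<eta> m \<nu> n s y0 (Suc j))
     \<ge> (1 - \<rho>) * (\<Sum>s\<in>perm_seqs n K. epv L \<eta> m \<nu> n s y0 j) + real (card (perm_seqs n K)) * C"
proof -
  define P where "P = {\<sigma>::nat\<Rightarrow>nat. \<sigma> permutes {..<n}}"
  define I where "I = {1..K} - {Suc j}"
  define G where "G = PiE I (\<lambda>_. P)"
  have finP: "finite P" unfolding P_def by (rule finite_permutations) simp
  have a: "Suc j \<in> {1..K}" using j by simp
  have PS: "perm_seqs n K = PiE {1..K} (\<lambda>_. P)" unfolding perm_seqs_def P_def ..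
  have split: "(\<Sum>s\<in>perm_seqs n K. h s) = (\<Sum>x\<in>P. \<Sum>g\<in>G. h (g(Suc j := x)))" for h :: "_ \<Rightarrow> real"
    unfolding PS G_def I_def by (rule sum_PiE_split[OF _ a]) (use finP in auto)
  have loc: "epv L \<eta> m \<nu> n (g(Suc j := x)) y0 j = epv L \<eta> m \<nu> n g y0 j" for g x
    by (rule epv_local) auto
  have cardPS: "card (perm_seqs n K) = card P * card G"
  proof -
    obtain K' where K': "K = Suc K'" using j by (cases K) auto
    have c1: "card (perm_seqs n K) = card P ^ K" unfolding PS using finP by (simp add: card_PiE)
    have "card I = K'" unfolding I_def using a K' by (simp add: card_Diff_singleton)
    then have c2: "card G = card P ^ K'" unfolding G_def I_def using finP by (simp add: card_PiE)
    show ?thesis using c1 c2 K' by simp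
  qed
  have "(\<Sum>s\<in>perm_seqs n K. epv L \<eta> m \<nu> n s y0 (Suc j))
      = (\<Sum>x\<in>P. \<Sum>g\<in>G. run1 L \<eta> (\<lambda>i. bb m \<nu> (x i)) (epv L \<eta> m \<nu> n g y0 j) n)"
    unfolding split by (simp add: loc)
  also have "\<dots> = (\<Sum>g\<in>G. \<Sum>x\<in>P. run1 L \<eta> (\<lambda>i. bb m \<nu> (x i)) (epv L \<eta> m \<nu> n g y0 j) n)"
    by (rule sum.swap)
  also have "\<dots> \<ge> (\<Sum>g\<in>G. card P * ((1 - \<rho>) * epv L \<eta> m \<nu> n g y0 j + C))"
    unfolding P_def \<rho>_def C_def by (intro sum_mono perm_level[OF m1 mn L eta nu small])
  also have "(\<Sum>g\<in>G. card P * ((1 - \<rho>) * epv L \<eta> m \<nu> n g y0 j + C))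
      = (1 - \<rho>) * (card P * (\<Sum>g\<in>G. epv L \<eta> m \<nu> n g y0 j)) + card P * card G * C"
  proof -
    have "(\<Sum>g\<in>G. card P * ((1 - \<rho>) * epv L \<eta> m \<nu> n g y0 j + C))
        = (\<Sum>g\<in>G. ((1 - \<rho>) * card P) * epv L \<eta> m \<nu> n g y0 j + card P * C)"
      by (intro sum.cong refl) (simp add: algebra_simps)
    also have "\<dots> = ((1 - \<rho>) * card P) * (\<Sum>g\<in>G. epv L \<eta> m \<nu> n g y0 j) + card G * (card P * C)"
      by (simp add: sum.distrib sum_distrib_left[symmetric])
    finally show ?thesis by (simp add: mult_ac)
  qed
  also have "card P * (\<Sum>g\<in>G. epv L \<eta> m \<nu> n g y0 j) = (\<Sum>s\<in>perm_seqs n K. epv L \<eta> m \<nu> n s y0 j)"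
    unfolding split by (simp add: loc)
  finally show ?thesis unfolding cardPS by simp
qed

lemma geo_step: "(1 - (\<rho>::real)) * (c * (C * (\<Sum>i<j. (1 - \<rho>)^i))) + c * C
      = c * (C * (\<Sum>i<Suc j. (1 - \<rho>)^i))"
proof -
  have e: "(\<Sum>i<Suc j. (1 - \<rho>)^i) = 1 + (1 - \<rho>) * (\<Sum>i<j. (1 - \<rho>)^i)"
    by (simp add: sum.lessThan_Suc_shift sum_distrib_left del: sum.lessThan_Suc)
  show ?thesis unfolding e by (simp add: ring_distribs mult_ac)
qed

lemma epoch_lower:
  assumes m1: "m \<ge> 1" and mn: "2 * m \<le> n" and L: "L > 0" and eta: "\<eta> > 0" and nu: "\<nu> > 0"
    and small: "\<eta> * L * n \<le> 1/64" and j: "j \<le> K"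
  defines "\<rho> \<equiv> 3/4 * \<eta> * L * n + 2 * (\<eta> * L * n)^2"
    and "C \<equiv> (45/512 * \<eta>^2 * L * \<nu> / sqrt m * (m * (m + 1) / 4) :: real)"
  shows "(\<Sum>s\<in>perm_seqs n K. epv L \<eta> m \<nu> n s 0 j) \<ge> real (card (perm_seqs n K)) * (C * (\<Sum>i<j. (1 - \<rho>)^i))"
  using j
proof (induction j)
  case 0
  then show ?case by simp
next
  case (Suc j)
  have r1: "1 - \<rho> \<ge> 0"
  proof -
    have "\<eta> * L * n \<ge> 0" using eta L by simp
    then have sq: "(\<eta> * L * n)^2 \<le> (1/64)^2" using small by (intro power_mono) auto
    then have sq2: "(\<eta> * L * n)^2 \<le> 1/4096" by (simp add: power_divide)
    have e: "3/4 * \<eta> * L * n = 3/4 * (\<eta> * L * n)" by simp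
    show ?thesis using small sq2 e unfolding \<rho>_def by linarith
  qed
  have 1: "(\<Sum>s\<in>perm_seqs n K. epv L \<eta> m \<nu> n s 0 (Suc j))
     \<ge> (1 - \<rho>) * (\<Sum>s\<in>perm_seqs n K. epv L \<eta> m \<nu> n s 0 j) + real (card (perm_seqs n K)) * C"
    unfolding \<rho>_def C_def using Suc.prems by (intro epoch_rec[OF m1 mn L eta nu small]) simp
  have 2: "(1 - \<rho>) * (\<Sum>s\<in>perm_seqs n K. epv L \<eta> m \<nu> n s 0 j) + real (card (perm_seqs n K)) * C
      \<ge> (1 - \<rho>) * (real (card (perm_seqs n K)) * (C * (\<Sum>i<j. (1 - \<rho>)^i))) + real (card (perm_seqs n K)) * C"
  proof -
    have "(\<Sum>s\<in>perm_seqs n K. epv L \<eta> m \<nu> n s 0 j) \<ge> real (card (perm_seqs n K)) * (C * (\<Sum>i<j. (1 - \<rho>)^i))"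
      using Suc.IH Suc.prems by simp
    then show ?thesis using r1 by (intro add_right_mono mult_left_mono) 
  qed
  have 3: "(1 - \<rho>) * (real (card (perm_seqs n K)) * (C * (\<Sum>i<j. (1 - \<rho>)^i))) + real (card (perm_seqs n K)) * C
      = real (card (perm_seqs n K)) * (C * (\<Sum>i<Suc j. (1 - \<rho>)^i))"
    by (rule geo_step)
  show ?case using 1 2 3 by linarith
qed


lemma bern: "0 \<le> x \<Longrightarrow> x \<le> 1 \<Longrightarrow> (1 - x)^k \<ge> 1 - real k * (x::real)"
proof (induction k)
  case 0 then show ?case by simp
next
  case (Suc k)
  have p: "(1 - x)^k \<ge> 0" using Suc.prems by simp
  have "1 - real (Suc k) * x \<le> 1 - real (Suc k) * x + real k * x * x" using Suc.prems by simp
  also have "\<dots> = (1 - x) * (1 - real k * x)" by (simp add: algebra_simps)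
  also have "\<dots> \<le> (1 - x) * (1 - x)^k" using Suc by (intro mult_left_mono) auto
  also have "\<dots> = (1 - x)^Suc k" by simp
  finally show ?case .
qed

lemma geo_decay: "0 \<le> r \<Longrightarrow> r \<le> 1 \<Longrightarrow> (1 - r)^j * (1 + r * real j) \<le> (1::real)"
proof (induction j)
  case 0 then show ?case by simp
next
  case (Suc j)
  have p: "(1 - r)^j \<ge> 0" using Suc.prems by simp
  have "(1 - r)^Suc j * (1 + r * real (Suc j)) = (1 - r)^j * ((1 - r) * (1 + r * real j + r))" by (simp add: algebra_simps)
  also have "(1 - r) * (1 + r * real j + r) = (1 + r * real j) - r * r * (real j + 1)" by (simp add: algebra_simps)
  also have "(1 - r)^j * ((1 + r * real j) - r * r * (real j + 1)) \<le> (1 - r)^j * (1 + r * real j)"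
    using p Suc.prems by (intro mult_left_mono) auto
  also have "\<dots> \<le> 1" using Suc by simp
  finally show ?case .
qed

lemma geo_sum_half:
  assumes "0 < r" "r \<le> 1" "r * real j \<ge> 1"
  shows "(\<Sum>i<j. (1 - r)^i) \<ge> 1 / (2 * r)"
proof -
  have g: "r * (\<Sum>i<j. (1 - r)^i) = 1 - (1 - r)^j"
  proof -
    have "(1 - (1 - r)) * (\<Sum>i<j. (1 - r)^i) = 1 - (1 - r)^j" by (rule one_diff_power_eq[symmetric])
    then show ?thesis by simp
  qed
  have d: "(1 - r)^j * (1 + r * real j) \<le> 1" using assms by (intro geo_decay) auto
  have "(1 - r)^j * 2 \<le> (1 - r)^j * (1 + r * real j)" using assms by (intro mult_left_mono) auto
  with d have "(1 - r)^j \<le> 1/2" by linarith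
  with g have "r * (\<Sum>i<j. (1 - r)^i) \<ge> 1/2" by linarith
  then show ?thesis using assms by (simp add: field_simps)
qed

lemma weights_split:
  fixes w A B :: "nat \<Rightarrow> real" and S :: "nat set"
  assumes fin: "finite S" and w0: "\<And>k. k \<in> S \<Longrightarrow> w k \<ge> 0" and w1: "(\<Sum>k\<in>S. w k) = 1"
    and A0: "\<And>k. k \<in> S \<Longrightarrow> A k \<ge> 0" and B0: "\<And>k. k \<in> S \<Longrightarrow> B k \<ge> 0"
    and alt: "\<And>k. k \<in> S \<Longrightarrow> A k \<ge> a \<or> B k \<ge> b"
  shows "(\<Sum>k\<in>S. w k * A k) \<ge> a / 2 \<or> (\<Sum>k\<in>S. w k * B k) \<ge> b / 2"
proof -
  define S1 where "S1 = {k\<in>S. A k \<ge> a}"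
  define W1 where "W1 = (\<Sum>k\<in>S1. w k)"
  have sub: "S1 \<subseteq> S" unfolding S1_def by auto
  have fin1: "finite S1" using fin sub finite_subset by blast
  have "(\<Sum>k\<in>S1. w k * a) \<le> (\<Sum>k\<in>S1. w k * A k)"
    using w0 sub unfolding S1_def by (intro sum_mono mult_left_mono) auto
  also have "\<dots> \<le> (\<Sum>k\<in>S. w k * A k)"
    using fin sub w0 A0 by (intro sum_mono2) auto
  finally have 1: "(\<Sum>k\<in>S. w k * A k) \<ge> W1 * a" unfolding W1_def by (simp add: sum_distrib_right)
  have W2: "(\<Sum>k\<in>S - S1. w k) = 1 - W1" unfolding W1_def using w1 fin sub by (simp add: sum_diff)
  have "(\<Sum>k\<in>S - S1. w k * b) \<le> (\<Sum>k\<in>S - S1. w k * B k)"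
  proof (intro sum_mono mult_left_mono)
    fix k assume k: "k \<in> S - S1"
    then show "b \<le> B k" using alt[of k] unfolding S1_def by auto
    show "0 \<le> w k" using k w0 by auto
  qed
  also have "\<dots> \<le> (\<Sum>k\<in>S. w k * B k)"
    using fin w0 B0 by (intro sum_mono2) auto
  finally have 2: "(\<Sum>k\<in>S. w k * B k) \<ge> (\<Sum>k\<in>S - S1. w k) * b" by (simp add: sum_distrib_right)
  then have 2: "(\<Sum>k\<in>S. w k * B k) \<ge> (1 - W1) * b" unfolding W2 .
  show ?thesis
  proof (cases "W1 \<ge> 1/2")
    case True
    then show ?thesis
    proof (cases "a \<ge> 0")
      case True
      then have "W1 * a \<ge> 1/2 * a" using \<open>W1 \<ge> 1/2\<close> by (intro mult_right_mono) auto
      then show ?thesis using 1 by simp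
    next
      case False
      have "(\<Sum>k\<in>S. w k * A k) \<ge> 0" using w0 A0 by (intro sum_nonneg) auto
      then show ?thesis using False by simp
    qed
  next
    case False
    then show ?thesis
    proof (cases "b \<ge> 0")
      case True
      then have "(1 - W1) * b \<ge> 1/2 * b" using False by (intro mult_right_mono) auto
      then show ?thesis using 2 by simp
    next
      case bF: False
      have "(\<Sum>k\<in>S. w k * B k) \<ge> 0" using w0 B0 by (intro sum_nonneg) auto
      then show ?thesis using bF by simp
    qed
  qed
qed


lemma cube_root: "x > 0 \<Longrightarrow> (x powr (1/3))^3 = (x::real)"
  by (simp add: powr_power)

lemma cube_root2: "x > 0 \<Longrightarrow> (x powr (2/3))^3 = (x::real)^2"
proof -
  assume x: "x > 0"
  have "(x powr (2/3))^3 = x powr (of_nat 3 * (2/3))" using x by (simp add: powr_power)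
  also have "\<dots> = x powr 2" by simp
  also have "\<dots> = x^2" using x by simp
  finally show ?thesis .
qed

lemma mu_facts:
  fixes L \<nu> D n K :: real
  assumes pos: "L > 0" "\<nu> > 0" "D > 0" "n > 0" "K > 0"
  defines "\<mu> \<equiv> L powr (1/3) * \<nu> powr (2/3) / (D powr (2/3) * n powr (1/3) * K powr (2/3))"
    and "T \<equiv> L powr (1/3) * \<nu> powr (2/3) * D powr (4/3) / (n powr (1/3) * K powr (2/3))"
  shows "\<mu> > 0" "T = \<mu> * D^2" "\<mu>^3 * (D^2 * n * K^2) = L * \<nu>^2"
proof -
  show "\<mu> > 0" unfolding \<mu>_def using pos by simp
  have D43: "D powr (4/3) * D powr (2/3) = D^2"
  proof -
    have "D powr (4/3) * D powr (2/3) = D powr (4/3 + 2/3)" by (rule powr_add[symmetric])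
    also have "\<dots> = D powr 2" by simp
    finally show ?thesis using pos by simp
  qed
  have Dp: "D powr (2/3) > 0" using pos by simp
  show "T = \<mu> * D^2" unfolding T_def \<mu>_def using Dp D43[symmetric]
    by (simp add: field_simps)
  have "\<mu>^3 = (L powr (1/3))^3 * (\<nu> powr (2/3))^3 / ((D powr (2/3))^3 * (n powr (1/3))^3 * (K powr (2/3))^3)"
    unfolding \<mu>_def by (simp add: power_divide power_mult_distrib)
  also have "\<dots> = L * \<nu>^2 / (D^2 * n * K^2)" using pos by (simp add: cube_root cube_root2)
  finally show "\<mu>^3 * (D^2 * n * K^2) = L * \<nu>^2" using pos by simp
qed



lemma avg_coords:
  fixes x0 :: "real^2"
  shows "(avg_iterate n (fam \<mu> L m \<nu>) \<eta> s x0 K \<alpha>)$1 =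
           (1 / (\<Sum>k\<in>{1..K+1}. \<alpha> k)) * (\<Sum>k\<in>{1..K+1}. \<alpha> k * ((1 - \<eta> * \<mu>)^(n * (k - 1)) * x0$1))"
    and "(avg_iterate n (fam \<mu> L m \<nu>) \<eta> s x0 K \<alpha>)$2 =
           (1 / (\<Sum>k\<in>{1..K+1}. \<alpha> k)) * (\<Sum>k\<in>{1..K+1}. \<alpha> k * epv L \<eta> m \<nu> n s (x0$2) (k - 1))"
  unfolding avg_iterate_def by (simp_all add: epoch_coords)

lemma maxsq: "b \<ge> 0 \<Longrightarrow> (max y 0)^2 \<ge> 2 * b * y - (b::real)^2"
proof (cases "y \<ge> 0")
  case True
  assume "b \<ge> 0"
  have "(y - b)^2 \<ge> 0" by simp
  then show ?thesis using True by (simp add: power2_eq_square algebra_simps)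
next
  case False
  assume b: "b \<ge> 0"
  have "b * y \<le> 0" using False b by (simp add: mult_nonneg_nonpos)
  then have h1: "2 * b * y \<le> 0" by (simp add: mult.assoc)
  have h2: "(max y 0)^2 = 0" using False by simp
  have h3: "b^2 \<ge> 0" by simp
  show ?thesis using h1 h2 h3 by linarith
qed

lemma perm_seqs_ne: "card (perm_seqs n K) > 0"
proof -
  have fin: "finite {\<sigma>::nat\<Rightarrow>nat. \<sigma> permutes {..<n}}" by (rule finite_permutations) simp
  have ne: "{\<sigma>::nat\<Rightarrow>nat. \<sigma> permutes {..<n}} \<noteq> {}" using permutes_id by blast
  have "card (perm_seqs n K) = card {\<sigma>::nat\<Rightarrow>nat. \<sigma> permutes {..<n}} ^ card {1..K}"
    unfolding perm_seqs_def using fin by (simp add: card_PiE)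
  moreover have "card {\<sigma>::nat\<Rightarrow>nat. \<sigma> permutes {..<n}} > 0" using fin ne by (simp add: card_gt_0_iff)
  ultimately show ?thesis by simp
qed



lemma Y_bound:
  fixes n :: nat and L \<eta> \<nu> :: real
  assumes n2: "n \<ge> 2" and L: "L > 0" and eta: "\<eta> > 0" and nu: "\<nu> > 0" and small: "\<eta> * L * n \<le> 1/64"
  defines "m \<equiv> n div 2"
  defines "\<rho> \<equiv> 3/4 * \<eta> * L * n + 2 * (\<eta> * L * n)^2"
    and "C \<equiv> (45/512 * \<eta>^2 * L * \<nu> / sqrt m * (m * (m + 1) / 4) :: real)"
  shows "\<rho> > 0" "\<rho> \<le> \<eta> * L * n" "\<rho> \<ge> 3/4 * (\<eta> * L * n)" "\<rho> \<le> 1" "C \<ge> 0"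
    "C / \<rho> \<ge> \<eta> * \<nu> * sqrt n / 200"
proof -
  define u where "u = \<eta> * L * n"
  have u0: "u > 0" unfolding u_def using eta L n2 by simp
  have u1: "u \<le> 1/64" unfolding u_def using small .
  have r: "\<rho> = 3/4 * u + 2 * u^2" unfolding \<rho>_def u_def by simp
  have uu: "u^2 \<le> u / 64"
  proof -
    have "u * u \<le> u * (1/64)" using u0 u1 by (intro mult_left_mono) auto
    then show ?thesis by (simp add: power2_eq_square)
  qed
  show rpos: "\<rho> > 0" unfolding r using u0 zero_le_power2[of u] by linarith
  show rle: "\<rho> \<le> \<eta> * L * n" unfolding r u_def[symmetric] using uu u0 by linarith
  show "\<rho> \<ge> 3/4 * (\<eta> * L * n)" unfolding r u_def[symmetric] using zero_le_power2[of u] by linarith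
  show "\<rho> \<le> 1" unfolding r using uu u1 u0 by linarith
  have m1: "m \<ge> 1" unfolding m_def using n2 by simp
  show C0: "C \<ge> 0" unfolding C_def using eta L nu by simp
  have mn4: "real m \<ge> real n / 4" unfolding m_def using n2 by linarith
  have mn2: "real m + 1 \<ge> real n / 2" unfolding m_def using n2 by linarith
  have sq: "sqrt m \<ge> sqrt n / 2"
  proof -
    have "sqrt (real n / 4) \<le> sqrt m" using mn4 by (rule real_sqrt_le_mono)
    moreover have "sqrt (real n / 4) = sqrt n / 2" by (simp add: real_sqrt_divide)
    ultimately show ?thesis by simp
  qed
  have sm: "sqrt m > 0" using m1 by simp
  have key: "real m * (real m + 1) / sqrt m \<ge> real n * sqrt n / 4"
  proof -
    have "real m / sqrt m = sqrt m" using sm by (metis real_div_sqrt of_nat_0_le_iff)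
    moreover have "real m * (real m + 1) / sqrt m = (real m / sqrt m) * (real m + 1)"
      by (simp only: divide_inverse mult_ac)
    ultimately have "real m * (real m + 1) / sqrt m = sqrt m * (real m + 1)" by simp
    also have "\<dots> \<ge> (sqrt n / 2) * (real n / 2)" using sq mn2 by (intro mult_mono) auto
    finally show ?thesis by (simp add: mult.commute)
  qed
  have rp: "\<rho> > 0" "\<rho> \<le> \<eta> * L * n" using rpos rle by simp_all
  have "C / \<rho> \<ge> C / (\<eta> * L * n)" using rp C0 by (intro divide_left_mono) auto
  also have "C / (\<eta> * L * n) = 45/2048 * \<eta> * \<nu> * (real m * (real m + 1) / sqrt m) / n"
    unfolding C_def using eta L n2 sm by (simp add: field_simps power2_eq_square)
  also have "\<dots> \<ge> 45/2048 * \<eta> * \<nu> * (real n * sqrt n / 4) / n"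
    using key eta nu n2 by (intro divide_right_mono mult_left_mono) auto
  also have "45/2048 * \<eta> * \<nu> * (real n * sqrt n / 4) / n = 45/8192 * \<eta> * \<nu> * sqrt n"
    using n2 by (simp add: field_simps)
  finally show "C / \<rho> \<ge> \<eta> * \<nu> * sqrt n / 200"
  proof -
    assume "45/8192 * \<eta> * \<nu> * sqrt n \<le> C / \<rho>"
    moreover have "\<eta> * \<nu> * sqrt n / 200 \<le> 45/8192 * \<eta> * \<nu> * sqrt n" using eta nu by simp
    ultimately show ?thesis by linarith
  qed
qed



lemma final_scalar:
  fixes n K :: nat and L \<nu> D \<mu> T \<eta> \<rho> C :: real and w :: "nat \<Rightarrow> real"
  assumes n2: "n \<ge> 2" and K1: "K \<ge> 1" and L: "L > 0" and nu: "\<nu> > 0" and D: "D > 0"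
    and mu: "\<mu> > 0" "\<mu> \<le> L/4" and T: "T = \<mu> * D^2" and cube: "\<mu>^3 * (D^2 * n * K^2) = L * \<nu>^2"
    and eta: "\<eta> > 0" and small: "\<eta> * L * n \<le> 1/64"
    and rho: "\<rho> > 0" "\<rho> \<le> 1" "\<rho> \<ge> 3/4 * (\<eta> * L * n)" and C0: "C \<ge> 0"
    and Y: "C / \<rho> \<ge> \<eta> * \<nu> * sqrt n / 200"
    and w0: "\<And>k. k \<in> {1..K+1} \<Longrightarrow> w k \<ge> 0" and w1: "(\<Sum>k\<in>{1..K+1}. w k) = 1"
  shows "\<mu>/2 * (\<Sum>k\<in>{1..K+1}. w k * ((1 - \<eta> * \<mu>)^(n * (k - 1)) * D))^2
       + L/4 * (\<Sum>k\<in>{1..K+1}. w k * (C * (\<Sum>i<k - 1. (1 - \<rho>)^i)))^2 \<ge> T / 2^30"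
proof -
  define S where "S = {1..K+1}"
  define A where "A = (\<lambda>k. (1 - \<eta> * \<mu>)^(n * (k - 1)) * D)"
  define B where "B = (\<lambda>k. C * (\<Sum>i<k - 1. (1 - \<rho>)^i))"
  define a1 where "a1 = (\<Sum>k\<in>S. w k * A k)"
  define b where "b = (\<Sum>k\<in>S. w k * B k)"
  define Y where "Y = C / \<rho>"
  have T0: "T > 0" unfolding T using mu D by simp
  have emu: "\<eta> * \<mu> \<le> 1/64"
  proof -
    have "\<eta> * \<mu> \<le> \<eta> * L" using mu eta by (intro mult_left_mono) auto
    also have "\<eta> * L \<le> \<eta> * L * n" using eta L n2 by simp
    finally show ?thesis using small by simp
  qed
  have emu0: "\<eta> * \<mu> \<ge> 0" using eta mu by simp
  have A0: "A k \<ge> 0" for k unfolding A_def using emu D by simp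
  have B0: "B k \<ge> 0" for k unfolding B_def using C0 rho by (intro mult_nonneg_nonneg sum_nonneg) auto
  have a10: "a1 \<ge> 0" unfolding a1_def S_def using w0 A0 by (intro sum_nonneg mult_nonneg_nonneg) auto
  have b0: "b \<ge> 0" unfolding b_def S_def using w0 B0 by (intro sum_nonneg mult_nonneg_nonneg) auto
  have Abern: "A k \<ge> D * (1 - real (n * (k - 1)) * (\<eta> * \<mu>))" for k
    unfolding A_def using bern[OF emu0, of "n * (k - 1)"] emu D by (simp add: mult.commute)
  have goal_from_a: "\<mu>/2 * a1^2 + L/4 * b^2 \<ge> T / 2^30" if "a1 \<ge> D/4"
  proof -
    have "a1^2 \<ge> (D/4)^2" using that D by (intro power_mono) auto
    then have "\<mu>/2 * a1^2 \<ge> \<mu>/2 * (D/4)^2" using mu by (intro mult_left_mono) auto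
    moreover have "\<mu>/2 * (D/4)^2 = T / 32" unfolding T by (simp add: power2_eq_square)
    moreover have "L/4 * b^2 \<ge> 0" using L by simp
    moreover have "T / 32 \<ge> T / 2^30" using T0 by (simp add: divide_left_mono)
    ultimately show ?thesis by linarith
  qed
  have "\<mu>/2 * a1^2 + L/4 * b^2 \<ge> T / 2^30"
  proof (cases "\<eta> \<le> 1 / (2 * \<mu> * n * K)")
    case True
    have "A k \<ge> D/2" if "k \<in> S" for k
    proof -
      have "n * (k - 1) \<le> n * K" using that unfolding S_def by (intro mult_left_mono) auto
      then have "real (n * (k - 1)) \<le> real (n * K)" by (simp only: of_nat_le_iff)
      then have "real (n * (k - 1)) \<le> real n * real K" by simp
      then have "real (n * (k - 1)) * (\<eta> * \<mu>) \<le> real n * real K * (\<eta> * \<mu>)" using emu0 by (intro mult_right_mono) auto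
      also have "\<dots> \<le> real n * real K * (1 / (2 * \<mu> * n * K) * \<mu>)"
        using True mu by (intro mult_left_mono mult_right_mono) auto
      also have "\<dots> = 1/2" using mu n2 K1 by (simp add: field_simps)
      finally have "1 - real (n * (k - 1)) * (\<eta> * \<mu>) \<ge> 1/2" by simp
      then have "D * (1 - real (n * (k - 1)) * (\<eta> * \<mu>)) \<ge> D * (1/2)" using D by (intro mult_left_mono) auto
      then show ?thesis using Abern[of k] by simp
    qed
    then have "a1 \<ge> (\<Sum>k\<in>S. w k * (D/2))" unfolding a1_def S_def using w0 by (intro sum_mono mult_left_mono) auto
    also have "(\<Sum>k\<in>S. w k * (D/2)) = (\<Sum>k\<in>S. w k) * (D/2)" by (rule sum_distrib_right[symmetric])
    also have "\<dots> = D/2" using w1 unfolding S_def by simp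
    finally have "a1 \<ge> D/4" using D by simp
    then show ?thesis by (rule goal_from_a)
  next
    case False
    then have eta_big: "\<eta> \<ge> 1 / (2 * \<mu> * n * K)" by simp
    have alt: "A k \<ge> D/2 \<or> B k \<ge> Y/2" if "k \<in> S" for k
    proof (cases "\<rho> * real (k - 1) < 1")
      case True
      have "real (n * (k - 1)) * (\<eta> * \<mu>) = (real (k - 1)) * (real n * \<eta> * \<mu>)" by simp
      also have "\<dots> \<le> (1 / \<rho>) * (real n * \<eta> * \<mu>)"
      proof (rule mult_right_mono)
        show "real (k - 1) \<le> 1 / \<rho>" using True rho by (simp add: field_simps)
        show "0 \<le> real n * \<eta> * \<mu>" using eta mu by simp
      qed
      also have "\<dots> \<le> (1 / (3/4 * (\<eta> * L * n))) * (real n * \<eta> * \<mu>)"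
        using rho eta L n2 mu by (intro mult_right_mono divide_left_mono) auto
      also have "\<dots> = 4/3 * (\<mu> / L)" using eta L n2 by (simp add: field_simps)
      also have "\<dots> \<le> 1/2" using mu L by (simp add: field_simps)
      finally have "1 - real (n * (k - 1)) * (\<eta> * \<mu>) \<ge> 1/2" by simp
      then have "D * (1 - real (n * (k - 1)) * (\<eta> * \<mu>)) \<ge> D * (1/2)" using D by (intro mult_left_mono) auto
      then show ?thesis using Abern[of k] by simp
    next
      case False
      have rk: "\<rho> * real (k - 1) \<ge> 1" using False by linarith
      have "(\<Sum>i<k - 1. (1 - \<rho>)^i) \<ge> 1 / (2 * \<rho>)" by (rule geo_sum_half[OF rho(1) rho(2) rk])
      then have "C * (\<Sum>i<k - 1. (1 - \<rho>)^i) \<ge> C * (1 / (2 * \<rho>))" using C0 by (intro mult_left_mono) auto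
      then show ?thesis unfolding B_def Y_def by simp
    qed
    have split: "a1 \<ge> (D/2) / 2 \<or> b \<ge> (Y/2) / 2"
      unfolding a1_def b_def S_def
      by (rule weights_split[OF _ w0 w1]) (use A0 B0 alt S_def in auto)
    show ?thesis
    proof (cases "a1 \<ge> D/4")
      case True
      then show ?thesis by (rule goal_from_a)
    next
      case False
      then have bY: "b \<ge> Y/4" using split by simp
      have Y0: "Y \<ge> \<eta> * \<nu> * sqrt n / 200" using Y unfolding Y_def .
      have Yp: "\<eta> * \<nu> * sqrt n / 200 \<ge> 0" using eta nu by simp
      have "b^2 \<ge> (\<eta> * \<nu> * sqrt n / 800)^2" using bY Y0 Yp by (intro power_mono) auto
      also have "(\<eta> * \<nu> * sqrt n / 800)^2 = \<eta>^2 * \<nu>^2 * n / 640000"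
        by (simp add: power_mult_distrib power_divide)
      finally have b2: "b^2 \<ge> \<eta>^2 * \<nu>^2 * n / 640000" .
      have e2: "\<eta>^2 \<ge> (1 / (2 * \<mu> * n * K))^2" using eta_big mu n2 K1 by (intro power_mono) auto
      have "L/4 * b^2 \<ge> L/4 * (\<eta>^2 * \<nu>^2 * n / 640000)" using b2 L by (intro mult_left_mono) auto
      also have "L/4 * (\<eta>^2 * \<nu>^2 * n / 640000) \<ge> L/4 * ((1 / (2 * \<mu> * n * K))^2 * \<nu>^2 * n / 640000)"
        using e2 L nu n2 by (intro mult_left_mono divide_right_mono mult_right_mono) auto
      also have "L/4 * ((1 / (2 * \<mu> * n * K))^2 * \<nu>^2 * n / 640000) = (L * \<nu>^2) / (10240000 * \<mu>^2 * n * K^2)"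
        using mu n2 K1 by (simp add: field_simps power2_eq_square)
      also have "(L * \<nu>^2) / (10240000 * \<mu>^2 * n * K^2) = T / 10240000"
      proof -
        have "L * \<nu>^2 = (\<mu> * D^2) * (\<mu>^2 * n * K^2)" using cube by (simp add: power3_eq_cube power2_eq_square algebra_simps)
        then show ?thesis unfolding T using mu n2 K1 by (simp add: field_simps)
      qed
      finally have "L/4 * b^2 \<ge> T / 10240000" .
      moreover have "T / 10240000 \<ge> T / 2^30" using T0 by (simp add: divide_left_mono)
      moreover have "\<mu>/2 * a1^2 \<ge> 0" using mu by simp
      ultimately show ?thesis by linarith
    qed
  qed
  then show ?thesis unfolding a1_def b_def A_def B_def S_def .
qed



lemma core_bound:
  fixes n K :: nat and L \<nu> D \<mu> T \<eta> :: real and \<alpha> :: "nat \<Rightarrow> real"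
  assumes n2: "n \<ge> 2" and K1: "K \<ge> 1" and L: "L > 0" and nu: "\<nu> > 0" and D: "D > 0"
    and mu: "\<mu> > 0" "\<mu> \<le> L/4" and T: "T = \<mu> * D^2" and cube: "\<mu>^3 * (D^2 * n * K^2) = L * \<nu>^2"
    and eta: "\<eta> > 0" and small: "\<eta> * L * n \<le> 1/64"
    and a0: "\<forall>k\<in>{1..K+1}. \<alpha> k \<ge> 0" and ane: "\<exists>k\<in>{1..K+1}. \<alpha> k \<noteq> 0"
  shows "expect_rr n K (\<lambda>s. q2 \<mu> L 0 (avg_iterate n (fam \<mu> L (n div 2) \<nu>) \<eta> s (vector [D, 0]) K \<alpha>) - 0)
           \<ge> T / 2^30"
proof -
  define m where "m = n div 2"
  define S where "S = {1..K+1}"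
  define W where "W = (\<Sum>k\<in>S. \<alpha> k)"
  define w where "w = (\<lambda>k. \<alpha> k / W)"
  define x0 :: "real^2" where "x0 = vector [D, 0]"
  define \<rho> where "\<rho> = 3/4 * \<eta> * L * n + 2 * (\<eta> * L * n)^2"
  define C where "C = (45/512 * \<eta>^2 * L * \<nu> / sqrt (real m) * (real m * (real m + 1) / 4) :: real)"
  define PS where "PS = perm_seqs n K"
  define N where "N = real (card PS)"
  define xh where "xh = (\<lambda>s. avg_iterate n (fam \<mu> L m \<nu>) \<eta> s x0 K \<alpha>)"
  define A where "A = (\<lambda>k. (1 - \<eta> * \<mu>)^(n * (k - 1)) * D)"
  define B where "B = (\<lambda>k. C * (\<Sum>i<k - 1. (1 - \<rho>)^i))"
  define a1 where "a1 = (\<Sum>k\<in>S. w k * A k)"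
  define b where "b = (\<Sum>k\<in>S. w k * B k)"
  have m1: "m \<ge> 1" and mn: "2 * m \<le> n" unfolding m_def using n2 by auto
  note Yb = Y_bound[OF n2 L eta nu small]
  have rho: "\<rho> > 0" "\<rho> \<le> 1" "\<rho> \<ge> 3/4 * (\<eta> * L * n)"
    unfolding \<rho>_def by (rule Yb(1), rule Yb(4), rule Yb(3))
  have C0: "C \<ge> 0" unfolding C_def m_def by (rule Yb(5))
  have Y: "C / \<rho> \<ge> \<eta> * \<nu> * sqrt n / 200" unfolding C_def m_def \<rho>_def by (rule Yb(6))
  have W0: "W > 0"
  proof -
    obtain k0 where k0: "k0 \<in> S" "\<alpha> k0 \<noteq> 0" using ane unfolding S_def by auto
    have "\<alpha> k0 > 0" using k0 a0 unfolding S_def by force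
    moreover have "\<alpha> k0 \<le> W" unfolding W_def using k0 a0 unfolding S_def
      by (intro member_le_sum) auto
    ultimately show ?thesis by simp
  qed
  have w0: "\<And>k. k \<in> {1..K+1} \<Longrightarrow> w k \<ge> 0" unfolding w_def using a0 W0 by simp
  have w1: "(\<Sum>k\<in>{1..K+1}. w k) = 1" unfolding w_def using W0 by (simp add: sum_divide_distrib[symmetric] W_def S_def)
  have N0: "N > 0" unfolding N_def PS_def using perm_seqs_ne by simp
  have x1: "(xh s)$1 = a1" for s
  proof -
    have "(xh s)$1 = (1 / W) * (\<Sum>k\<in>S. \<alpha> k * A k)"
      unfolding xh_def avg_coords x0_def A_def W_def S_def by simp
    also have "\<dots> = a1" unfolding a1_def w_def by (simp add: sum_distrib_left)
    finally show ?thesis .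
  qed
  have x2: "(xh s)$2 = (\<Sum>k\<in>S. w k * epv L \<eta> m \<nu> n s 0 (k - 1))" for s
  proof -
    have "(xh s)$2 = (1 / W) * (\<Sum>k\<in>S. \<alpha> k * epv L \<eta> m \<nu> n s 0 (k - 1))"
      unfolding xh_def avg_coords x0_def W_def S_def by simp
    also have "\<dots> = (\<Sum>k\<in>S. w k * epv L \<eta> m \<nu> n s 0 (k - 1))" unfolding w_def by (simp add: sum_distrib_left)
    finally show ?thesis .
  qed
  have B0: "B k \<ge> 0" for k unfolding B_def using C0 rho by (intro mult_nonneg_nonneg sum_nonneg) auto
  have b0: "b \<ge> 0" unfolding b_def S_def using w0 B0 by (intro sum_nonneg mult_nonneg_nonneg) auto
  have sum2: "(\<Sum>s\<in>PS. (xh s)$2) \<ge> N * b"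
  proof -
    have "(\<Sum>s\<in>PS. (xh s)$2) = (\<Sum>k\<in>S. w k * (\<Sum>s\<in>PS. epv L \<eta> m \<nu> n s 0 (k - 1)))"
      unfolding x2 by (simp add: sum_distrib_left sum.swap[of _ PS])
    also have "\<dots> \<ge> (\<Sum>k\<in>S. w k * (N * B k))"
    proof (intro sum_mono mult_left_mono)
      fix k assume k: "k \<in> S"
      show "w k \<ge> 0" using w0 k unfolding S_def by auto
      have "k - 1 \<le> K" using k unfolding S_def by auto
      then show "N * B k \<le> (\<Sum>s\<in>PS. epv L \<eta> m \<nu> n s 0 (k - 1))"
        unfolding N_def PS_def B_def C_def \<rho>_def by (rule epoch_lower[OF m1 mn L eta nu small])
    qed
    also have "(\<Sum>k\<in>S. w k * (N * B k)) = N * b" unfolding b_def by (simp add: sum_distrib_left mult_ac)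
    finally show ?thesis .
  qed
  have pt: "q2 \<mu> L 0 (xh s) \<ge> \<mu>/2 * a1^2 + L/4 * (2 * b * (xh s)$2 - b^2)" for s
  proof -
    have "Gf L ((xh s)$2) \<ge> L/4 * (max ((xh s)$2) 0)^2" using L by (intro Gf_lower) simp
    also have "L/4 * (max ((xh s)$2) 0)^2 \<ge> L/4 * (2 * b * (xh s)$2 - b^2)"
      using maxsq[OF b0] L by (intro mult_left_mono) auto
    finally show ?thesis unfolding q2_def x1 by simp
  qed
  have t1: "(\<Sum>s\<in>PS. q2 \<mu> L 0 (xh s)) \<ge> (\<Sum>s\<in>PS. \<mu>/2 * a1^2 + L/4 * (2 * b * (xh s)$2 - b^2))"
    by (intro sum_mono pt)
  have t2: "(\<Sum>s\<in>PS. \<mu>/2 * a1^2 + L/4 * (2 * b * (xh s)$2 - b^2))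
      = N * (\<mu>/2 * a1^2) + L/2 * b * (\<Sum>s\<in>PS. (xh s)$2) - N * (L/4 * b^2)"
    unfolding N_def by (simp add: sum.distrib sum_subtractf sum_distrib_left algebra_simps)
  have t3: "L/2 * b * (\<Sum>s\<in>PS. (xh s)$2) \<ge> L/2 * b * (N * b)"
    using sum2 L b0 by (intro mult_left_mono) auto
  have t4: "N * (\<mu>/2 * a1^2) + L/2 * b * (N * b) - N * (L/4 * b^2) = N * (\<mu>/2 * a1^2 + L/4 * b^2)"
    by (simp add: algebra_simps power2_eq_square)
  have tot: "(\<Sum>s\<in>PS. q2 \<mu> L 0 (xh s)) \<ge> N * (\<mu>/2 * a1^2 + L/4 * b^2)"
    using t1 t2 t3 t4 by linarith
  have fs: "\<mu>/2 * a1^2 + L/4 * b^2 \<ge> T / 2^30"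
    unfolding a1_def b_def A_def B_def S_def
    by (rule final_scalar[OF n2 K1 L nu D mu T cube eta small rho C0 Y w0 w1])
  have "expect_rr n K (\<lambda>s. q2 \<mu> L 0 (xh s) - 0) = (\<Sum>s\<in>PS. q2 \<mu> L 0 (xh s)) / N"
    unfolding expect_rr_def PS_def N_def by simp
  also have "\<dots> \<ge> (N * (\<mu>/2 * a1^2 + L/4 * b^2)) / N" using tot N0 by (intro divide_right_mono) auto
  also have "(N * (\<mu>/2 * a1^2 + L/4 * b^2)) / N = \<mu>/2 * a1^2 + L/4 * b^2" using N0 by simp
  finally show ?thesis using fs unfolding xh_def x0_def m_def by linarith
qed



lemma q2_0_nonneg: "L \<ge> 0 \<Longrightarrow> \<mu> \<ge> 0 \<Longrightarrow> q2 \<mu> L 0 x \<ge> 0"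
  unfolding q2_def using Gf_nonneg[of L "x$2"] by simp

lemma q2_0_zero: "q2 \<mu> L 0 0 = 0"
  unfolding q2_def Gf_def by simp

lemma main_inner:
  fixes n K :: nat and L \<nu> D :: real
  assumes H: "n \<ge> 2 \<and> L > 0 \<and> \<nu> > 0 \<and> D > 0 \<and> K \<ge> 1 \<and>
      real K \<ge> 64 * max (L\<^sup>2 * D\<^sup>2 * real n / \<nu>\<^sup>2)
         (\<nu> / ((L powr (1/3) * \<nu> powr (2/3) / (D powr (2/3) * real n powr (1/3) * real K powr (2/3)))
               * D * sqrt (real n)))"
  shows "\<exists>(f :: nat \<Rightarrow> real^2 \<Rightarrow> real) (xstar :: real^2) (x0 :: real^2).
         fclass n L 0 0 \<nu> f \<and>
         (\<forall>x. Fsum n f xstar \<le> Fsum n f x) \<and>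
         norm (x0 - xstar) = D \<and>
         (\<forall>(\<eta>::real) (\<alpha>::nat \<Rightarrow> real).
            0 < \<eta> \<and> \<eta> \<le> 1 / (64 * L * real n) \<and>
            (\<forall>k\<in>{1..K+1}. \<alpha> k \<ge> 0) \<and> (\<exists>k\<in>{1..K+1}. \<alpha> k \<noteq> 0)
            \<longrightarrow>
            expect_rr n K (\<lambda>s. Fsum n f (avg_iterate n f \<eta> s x0 K \<alpha>) - (INF x. Fsum n f x))
              \<ge> 1 / 2^30 * (L powr (1/3) * \<nu> powr (2/3) * D powr (4/3) / (real n powr (1/3) * real K powr (2/3))))"
proof -
  have n2: "n \<ge> 2" and L: "L > 0" and nu: "\<nu> > 0" and D: "D > 0" and K1: "K \<ge> 1" using H by auto
  define \<mu> where "\<mu> = L powr (1/3) * \<nu> powr (2/3) / (D powr (2/3) * real n powr (1/3) * real K powr (2/3))"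
  define T where "T = L powr (1/3) * \<nu> powr (2/3) * D powr (4/3) / (real n powr (1/3) * real K powr (2/3))"
  have np: "real n > 0" and Kp: "real K > 0" using n2 K1 by auto
  note mf = mu_facts[OF L nu D np Kp]
  have mu0: "\<mu> > 0" unfolding \<mu>_def by (rule mf(1))
  have T: "T = \<mu> * D^2" unfolding T_def \<mu>_def by (rule mf(2))
  have cube: "\<mu>^3 * (D^2 * real n * real K^2) = L * \<nu>^2" unfolding \<mu>_def by (rule mf(3))
  have HK: "real K \<ge> 64 * (\<nu> / (\<mu> * D * sqrt (real n)))"
    using H unfolding \<mu>_def by (meson max.cobounded2 mult_left_mono order_trans zero_le_numeral)
  have q: "\<mu> * D * sqrt (real n) > 0" using mu0 D np by simp
  have P: "real K * (\<mu> * D * sqrt (real n)) \<ge> 64 * \<nu>"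
  proof -
    define qq where "qq = \<mu> * D * sqrt (real n)"
    have qq0: "qq > 0" unfolding qq_def using q .
    have "64 * (\<nu> / qq) * qq \<le> real K * qq"
      using HK qq0 unfolding qq_def[symmetric] by (intro mult_right_mono) auto
    moreover have "64 * (\<nu> / qq) * qq = 64 * \<nu>" using qq0 by simp
    ultimately show ?thesis unfolding qq_def by simp
  qed
  have P2: "(\<mu> * D * sqrt (real n) * real K)^2 \<ge> (64 * \<nu>)^2"
    using P nu by (intro power_mono) (auto simp: mult_ac)
  have P3: "(\<mu> * D * sqrt (real n) * real K)^2 = \<mu>^2 * (D^2 * real n * real K^2)"
    using np by (simp add: power_mult_distrib)
  have muL: "\<mu> \<le> L/4"
  proof -
    have "\<mu> * (64 * \<nu>)^2 \<le> \<mu> * (\<mu>^2 * (D^2 * real n * real K^2))"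
      using P2 P3 mu0 by (intro mult_left_mono) auto
    also have "\<dots> = L * \<nu>^2" using cube by (simp add: power3_eq_cube power2_eq_square algebra_simps)
    finally have "\<mu> * 4096 * \<nu>^2 \<le> L * \<nu>^2" by (simp add: power_mult_distrib)
    then have "\<mu> * 4096 \<le> L" using nu by simp
    then show ?thesis using mu0 by linarith
  qed
  define m where "m = n div 2"
  have mn: "2 * m \<le> n" and n0: "n > 0" unfolding m_def using n2 by auto
  define f where "f = fam \<mu> L m \<nu>"
  define x0 :: "real^2" where "x0 = vector [D, 0]"
  have F: "Fsum n f = q2 \<mu> L 0" unfolding f_def by (rule Fsum_fam[OF n0 mn])
  have fc: "fclass n L 0 0 \<nu> f" unfolding f_def using mu0 muL L nu by (intro fam_fclass[OF n0 mn]) auto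
  have minim: "\<forall>x. Fsum n f 0 \<le> Fsum n f x" unfolding F q2_0_zero using L mu0 by (auto intro: q2_0_nonneg)
  have nx: "norm (x0 - 0) = D"
  proof -
    have "(norm x0)^2 = D^2" unfolding norm2_sq x0_def by simp
    then show ?thesis using D by (simp add: power2_eq_iff_nonneg)
  qed
  have INF0: "(INF x. Fsum n f x) = 0"
    unfolding F
  proof (rule cInf_eq_minimum)
    have "q2 \<mu> L 0 0 \<in> range (q2 \<mu> L 0)" by (rule rangeI)
    then show "0 \<in> range (q2 \<mu> L 0)" by (simp add: q2_0_zero)
    fix y assume "y \<in> range (q2 \<mu> L 0)"
    then show "0 \<le> y" using q2_0_nonneg L mu0 by auto
  qed
  have main: "expect_rr n K (\<lambda>s. Fsum n f (avg_iterate n f \<eta> s x0 K \<alpha>) - (INF x. Fsum n f x))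
              \<ge> 1 / 2^30 * T"
    if eta: "0 < \<eta>" "\<eta> \<le> 1 / (64 * L * real n)" and a0: "\<forall>k\<in>{1..K+1}. \<alpha> k \<ge> 0"
      and ane: "\<exists>k\<in>{1..K+1}. \<alpha> k \<noteq> 0" for \<eta> \<alpha>
  proof -
    have small: "\<eta> * L * n \<le> 1/64"
    proof -
      have "\<eta> * (64 * L * real n) \<le> 1" using eta L np by (simp add: field_simps)
      then show ?thesis by (simp add: algebra_simps)
    qed
    have "expect_rr n K (\<lambda>s. q2 \<mu> L 0 (avg_iterate n (fam \<mu> L (n div 2) \<nu>) \<eta> s (vector [D, 0]) K \<alpha>) - 0) \<ge> T / 2^30"
    proof -
      have cube': "\<mu>^3 * (D^2 * real n * real (K^2)) = L * \<nu>^2" using cube by simp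
      show ?thesis by (rule core_bound[OF n2 K1 L nu D mu0 muL T cube' eta(1) small a0 ane])
    qed
    moreover have F': "Fsum n (fam \<mu> L (n div 2) \<nu>) = q2 \<mu> L 0" using F unfolding f_def m_def .
    ultimately show ?thesis unfolding INF0 unfolding f_def x0_def m_def F' by simp
  qed
  show ?thesis
    apply (rule exI[of _ f], rule exI[of _ 0], rule exI[of _ x0])
    using fc minim nx main unfolding T_def by blast
qed


theorem corollary5:
  "\<exists>c2 c3 c :: real. c2 > 0 \<and> c3 > 0 \<and> c > 0 \<and>
    (\<forall>(n::nat) (L::real) (\<nu>::real) (D::real) (K::nat).
      n \<ge> 2 \<and> L > 0 \<and> \<nu> > 0 \<and> D > 0 \<and> K \<ge> 1 \<and>
      real K \<ge> c3 * max (L\<^sup>2 * D\<^sup>2 * real n / \<nu>\<^sup>2)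
         (\<nu> / ((L powr (1/3) * \<nu> powr (2/3) / (D powr (2/3) * real n powr (1/3) * real K powr (2/3)))
               * D * sqrt (real n)))
      \<longrightarrow>
      (\<exists>(f :: nat \<Rightarrow> real^2 \<Rightarrow> real) (xstar :: real^2) (x0 :: real^2).
         fclass n L 0 0 \<nu> f \<and>
         (\<forall>x. Fsum n f xstar \<le> Fsum n f x) \<and>
         norm (x0 - xstar) = D \<and>
         (\<forall>(\<eta>::real) (\<alpha>::nat \<Rightarrow> real).
            0 < \<eta> \<and> \<eta> \<le> 1 / (c2 * L * real n) \<and>
            (\<forall>k\<in>{1..K+1}. \<alpha> k \<ge> 0) \<and> (\<exists>k\<in>{1..K+1}. \<alpha> k \<noteq> 0)
            \<longrightarrow>
            expect_rr n K (\<lambda>s. Fsum n f (avg_iterate n f \<eta> s x0 K \<alpha>) - (INF x. Fsum n f x))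
              \<ge> c * (L powr (1/3) * \<nu> powr (2/3) * D powr (4/3) / (real n powr (1/3) * real K powr (2/3))))))"
  apply (rule exI[of _ "64::real"], rule exI[of _ "64::real"], rule exI[of _ "1/2^30::real"])
  apply (intro conjI allI impI)
     apply simp
    apply simp
   apply simp
  apply (rule main_inner)
  apply assumption
  done

end
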